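(* Let $f: G\twoheadrightarrow H$ be a surjection of finite groups and let $r\in\mathbb{Z}$ be coprime to $|G|$. Then $\mathbb{Z}H\otimes_{\mathbb{Z}G}(I_G,r)\cong (I_H,r)$ as $\mathbb{Z}H$-modules.
   Context: For a finite group $G$, $I_G$ is the augmentation ideal of $\mathbb{Z}G$ and $(I_G,r)$ is the ideal of $\mathbb{Z}G$ generated by $I_G$ and $r$. $\mathbb{Z}H$ is a right $\mathbb{Z}G$-module via $f$. *)

theory Defs
  imports "HOL-Algebra.Algebra"
begin

text \<open>Elements of ZG are integer-valued functions on carrier G vanishing outside carrier G
  (G is finite, so these are exactly the finite formal Z-combinations of group elements).\<close>

definition group_ring :: "('g, 'm) monoid_scheme \<Rightarrow> ('g \<Rightarrow> int) ring" where
  "group_ring G =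
     \<lparr> carrier = {a. \<forall>x. x \<notin> carrier G \<longrightarrow> a x = 0},
       monoid.mult = (\<lambda>a b z. if z \<in> carrier G
                          then (\<Sum>x\<in>carrier G. a x * b (inv\<^bsub>G\<^esub> x \<otimes>\<^bsub>G\<^esub> z)) else 0),
       monoid.one = (\<lambda>z. if z = \<one>\<^bsub>G\<^esub> then 1 else 0),
       ring.zero = (\<lambda>z. 0),
       ring.add = (\<lambda>a b z. a z + b z) \<rparr>"

definition gr_int :: "('g, 'm) monoid_scheme \<Rightarrow> int \<Rightarrow> ('g \<Rightarrow> int)" where
  "gr_int G r = (\<lambda>z. if z = \<one>\<^bsub>G\<^esub> then r else 0)"

definition augmentation_ideal :: "('g, 'm) monoid_scheme \<Rightarrow> ('g \<Rightarrow> int) set" where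
  "augmentation_ideal G = {a \<in> carrier (group_ring G). (\<Sum>x\<in>carrier G. a x) = 0}"

definition aug_ideal_r :: "('g, 'm) monoid_scheme \<Rightarrow> int \<Rightarrow> ('g \<Rightarrow> int) set" where
  "aug_ideal_r G r = genideal (group_ring G) (augmentation_ideal G \<union> {gr_int G r})"

definition group_ring_map ::
  "('g, 'm) monoid_scheme \<Rightarrow> ('h, 'n) monoid_scheme \<Rightarrow> ('g \<Rightarrow> 'h) \<Rightarrow> ('g \<Rightarrow> int) \<Rightarrow> ('h \<Rightarrow> int)" where
  "group_ring_map G H f a =
     (\<lambda>h. if h \<in> carrier H then (\<Sum>x\<in>{x \<in> carrier G. f x = h}. a x) else 0)"

text \<open>Here M is a left ideal of ZG (a left ZG-module by multiplication) and ZH is a right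
  ZG-module via f.  The tensor product is constructed as the free abelian group on
  ZH \<times> M modulo the subgroup generated by the bilinearity and balancing relations.
  Elements of the free abelian group are finitely supported functions (ZH \<times> M) -> Z.\<close>

type_synonym ('h, 'g) free_elem = "(('h \<Rightarrow> int) \<times> ('g \<Rightarrow> int)) \<Rightarrow> int"

definition free_delta :: "('h \<Rightarrow> int) \<times> ('g \<Rightarrow> int) \<Rightarrow> ('h, 'g) free_elem" where
  "free_delta p = (\<lambda>q. if q = p then 1 else 0)"

definition free_add :: "('h, 'g) free_elem \<Rightarrow> ('h, 'g) free_elem \<Rightarrow> ('h, 'g) free_elem" where
  "free_add u v = (\<lambda>p. u p + v p)"

definition free_neg :: "('h, 'g) free_elem \<Rightarrow> ('h, 'g) free_elem" where
  "free_neg u = (\<lambda>p. - u p)"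

definition free_carrier ::
  "('h \<Rightarrow> int) set \<Rightarrow> ('g \<Rightarrow> int) set \<Rightarrow> ('h, 'g) free_elem set" where
  "free_carrier A M = {u. finite {p. u p \<noteq> 0} \<and> {p. u p \<noteq> 0} \<subseteq> A \<times> M}"

definition tensor_generators ::
  "('g, 'm) monoid_scheme \<Rightarrow> ('h, 'n) monoid_scheme \<Rightarrow> ('g \<Rightarrow> 'h) \<Rightarrow> ('g \<Rightarrow> int) set
     \<Rightarrow> ('h, 'g) free_elem set" where
  "tensor_generators G H f M =
     {free_add (free_delta (a \<oplus>\<^bsub>group_ring H\<^esub> a', m))
        (free_neg (free_add (free_delta (a, m)) (free_delta (a', m))))
      | a a' m. a \<in> carrier (group_ring H) \<and> a' \<in> carrier (group_ring H) \<and> m \<in> M}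
   \<union> {free_add (free_delta (a, m \<oplus>\<^bsub>group_ring G\<^esub> m'))
        (free_neg (free_add (free_delta (a, m)) (free_delta (a, m'))))
      | a m m'. a \<in> carrier (group_ring H) \<and> m \<in> M \<and> m' \<in> M}
   \<union> {free_add (free_delta (a \<otimes>\<^bsub>group_ring H\<^esub> group_ring_map G H f x, m))
        (free_neg (free_delta (a, x \<otimes>\<^bsub>group_ring G\<^esub> m)))
      | a x m. a \<in> carrier (group_ring H) \<and> x \<in> carrier (group_ring G) \<and> m \<in> M}"

inductive_set tensor_relations ::
  "('g, 'm) monoid_scheme \<Rightarrow> ('h, 'n) monoid_scheme \<Rightarrow> ('g \<Rightarrow> 'h) \<Rightarrow> ('g \<Rightarrow> int) set
     \<Rightarrow> ('h, 'g) free_elem set"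
  for G H f M where
    rel_zero: "(\<lambda>p. 0) \<in> tensor_relations G H f M"
  | rel_gen: "u \<in> tensor_generators G H f M \<Longrightarrow> u \<in> tensor_relations G H f M"
  | rel_add: "u \<in> tensor_relations G H f M \<Longrightarrow> v \<in> tensor_relations G H f M
               \<Longrightarrow> free_add u v \<in> tensor_relations G H f M"
  | rel_neg: "u \<in> tensor_relations G H f M \<Longrightarrow> free_neg u \<in> tensor_relations G H f M"

definition tensor_class ::
  "('g, 'm) monoid_scheme \<Rightarrow> ('h, 'n) monoid_scheme \<Rightarrow> ('g \<Rightarrow> 'h) \<Rightarrow> ('g \<Rightarrow> int) set
     \<Rightarrow> ('h, 'g) free_elem \<Rightarrow> ('h, 'g) free_elem set" where
  "tensor_class G H f M u = free_add u ` tensor_relations G H f M"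

definition tensor_carrier ::
  "('g, 'm) monoid_scheme \<Rightarrow> ('h, 'n) monoid_scheme \<Rightarrow> ('g \<Rightarrow> 'h) \<Rightarrow> ('g \<Rightarrow> int) set
     \<Rightarrow> ('h, 'g) free_elem set set" where
  "tensor_carrier G H f M =
     tensor_class G H f M ` free_carrier (carrier (group_ring H)) M"

definition tensor_add ::
  "('g, 'm) monoid_scheme \<Rightarrow> ('h, 'n) monoid_scheme \<Rightarrow> ('g \<Rightarrow> 'h) \<Rightarrow> ('g \<Rightarrow> int) set
     \<Rightarrow> ('h, 'g) free_elem set \<Rightarrow> ('h, 'g) free_elem set \<Rightarrow> ('h, 'g) free_elem set" where
  "tensor_add G H f M S1 S2 =
     tensor_class G H f M (free_add (SOME u. u \<in> S1) (SOME v. v \<in> S2))"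

text \<open>Left ZH-action on the free abelian group: b \<cdot> (a, m) = (b a, m), extended linearly.\<close>
definition free_smult ::
  "('h, 'n) monoid_scheme \<Rightarrow> ('h \<Rightarrow> int) \<Rightarrow> ('h, 'g) free_elem \<Rightarrow> ('h, 'g) free_elem" where
  "free_smult H b u =
     (\<lambda>q. \<Sum>p\<in>{p. u p \<noteq> 0 \<and> (b \<otimes>\<^bsub>group_ring H\<^esub> fst p, snd p) = q}. u p)"

definition tensor_smult ::
  "('g, 'm) monoid_scheme \<Rightarrow> ('h, 'n) monoid_scheme \<Rightarrow> ('g \<Rightarrow> 'h) \<Rightarrow> ('g \<Rightarrow> int) set
     \<Rightarrow> ('h \<Rightarrow> int) \<Rightarrow> ('h, 'g) free_elem set \<Rightarrow> ('h, 'g) free_elem set" where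
  "tensor_smult G H f M b S1 = tensor_class G H f M (free_smult H b (SOME u. u \<in> S1))"

end

theory Submission imports Defs begin

definition gr_e :: "'a \<Rightarrow> 'a \<Rightarrow> int" where "gr_e g = (\<lambda>z. if z = g then 1 else 0)"

definition eps :: "('g, 'm) monoid_scheme \<Rightarrow> ('g \<Rightarrow> int) \<Rightarrow> int" where "eps G a = (\<Sum>x\<in>carrier G. a x)"

definition Er :: "('g, 'm) monoid_scheme \<Rightarrow> int \<Rightarrow> ('g \<Rightarrow> int) set" where
  "Er G r = {a \<in> carrier (group_ring G). r dvd eps G a}"

lemma gr_simps:
  "carrier (group_ring G) = {a. \<forall>x. x \<notin> carrier G \<longrightarrow> a x = 0}"
  "a \<otimes>\<^bsub>group_ring G\<^esub> b = (\<lambda>z. if z \<in> carrier G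
                          then (\<Sum>x\<in>carrier G. a x * b (inv\<^bsub>G\<^esub> x \<otimes>\<^bsub>G\<^esub> z)) else 0)"
  "\<one>\<^bsub>group_ring G\<^esub> = (\<lambda>z. if z = \<one>\<^bsub>G\<^esub> then 1 else 0)"
  "\<zero>\<^bsub>group_ring G\<^esub> = (\<lambda>z. 0)"
  "a \<oplus>\<^bsub>group_ring G\<^esub> b = (\<lambda>z. a z + b z)"
  by (simp_all add: group_ring_def)

context
  fixes G :: "('g, 'm) monoid_scheme"
  assumes grp: "group G" and fin: "finite (carrier G)"
begin

interpretation G: group G by (rule grp)

lemma Gc1[simp]: "x \<in> carrier G \<Longrightarrow> y \<in> carrier G \<Longrightarrow> x \<otimes>\<^bsub>G\<^esub> (inv\<^bsub>G\<^esub> x \<otimes>\<^bsub>G\<^esub> y) = y"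
  by (simp add: G.m_assoc[symmetric])
lemma Gc2[simp]: "x \<in> carrier G \<Longrightarrow> y \<in> carrier G \<Longrightarrow> inv\<^bsub>G\<^esub> x \<otimes>\<^bsub>G\<^esub> (x \<otimes>\<^bsub>G\<^esub> y) = y"
  by (simp add: G.m_assoc[symmetric])

lemma Gc3: "x \<in> carrier G \<Longrightarrow> a \<in> carrier G \<Longrightarrow> z \<in> carrier G \<Longrightarrow>
  inv\<^bsub>G\<^esub> (inv\<^bsub>G\<^esub> x \<otimes>\<^bsub>G\<^esub> a) \<otimes>\<^bsub>G\<^esub> (inv\<^bsub>G\<^esub> x \<otimes>\<^bsub>G\<^esub> z) = inv\<^bsub>G\<^esub> a \<otimes>\<^bsub>G\<^esub> z"
  by (simp add: G.inv_mult_group G.m_assoc)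

lemma gr_mult_assoc:
  assumes "a \<in> carrier (group_ring G)" "b \<in> carrier (group_ring G)" "c \<in> carrier (group_ring G)"
  shows "(a \<otimes>\<^bsub>group_ring G\<^esub> b) \<otimes>\<^bsub>group_ring G\<^esub> c = a \<otimes>\<^bsub>group_ring G\<^esub> (b \<otimes>\<^bsub>group_ring G\<^esub> c)"
proof (rule ext)
  fix z
  show "((a \<otimes>\<^bsub>group_ring G\<^esub> b) \<otimes>\<^bsub>group_ring G\<^esub> c) z = (a \<otimes>\<^bsub>group_ring G\<^esub> (b \<otimes>\<^bsub>group_ring G\<^esub> c)) z"
  proof (cases "z \<in> carrier G")
    case False thus ?thesis by (simp add: gr_simps)
  next
    case z: True
    have inner: "(\<Sum>y\<in>carrier G. b (inv\<^bsub>G\<^esub> x \<otimes>\<^bsub>G\<^esub> y) * c (inv\<^bsub>G\<^esub> y \<otimes>\<^bsub>G\<^esub> z))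
       = (\<Sum>w\<in>carrier G. b w * c (inv\<^bsub>G\<^esub> w \<otimes>\<^bsub>G\<^esub> (inv\<^bsub>G\<^esub> x \<otimes>\<^bsub>G\<^esub> z)))" if x: "x \<in> carrier G" for x
      apply (rule sum.reindex_bij_witness[where j="\<lambda>w. inv\<^bsub>G\<^esub> x \<otimes>\<^bsub>G\<^esub> w" and i="\<lambda>y. x \<otimes>\<^bsub>G\<^esub> y"])
      using x z by (simp_all add: Gc3)
    have "((a \<otimes>\<^bsub>group_ring G\<^esub> b) \<otimes>\<^bsub>group_ring G\<^esub> c) z
       = (\<Sum>y\<in>carrier G. (\<Sum>x\<in>carrier G. a x * b (inv\<^bsub>G\<^esub> x \<otimes>\<^bsub>G\<^esub> y)) * c (inv\<^bsub>G\<^esub> y \<otimes>\<^bsub>G\<^esub> z))"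
      using z unfolding gr_simps(2) by (auto intro!: sum.cong)
    also have "\<dots> = (\<Sum>x\<in>carrier G. a x * (\<Sum>y\<in>carrier G. b (inv\<^bsub>G\<^esub> x \<otimes>\<^bsub>G\<^esub> y) * c (inv\<^bsub>G\<^esub> y \<otimes>\<^bsub>G\<^esub> z)))"
      by (simp only: sum_distrib_left sum_distrib_right mult.assoc) (rule sum.swap)
    also have "\<dots> = (a \<otimes>\<^bsub>group_ring G\<^esub> (b \<otimes>\<^bsub>group_ring G\<^esub> c)) z"
      using z unfolding gr_simps(2) by (auto intro!: sum.cong simp: inner)
    finally show ?thesis .
  qed
qed

lemma gr_one_carrier: "\<one>\<^bsub>group_ring G\<^esub> \<in> carrier (group_ring G)"
  by (auto simp: gr_simps)

lemma gr_mult_carrier: "a \<otimes>\<^bsub>group_ring G\<^esub> b \<in> carrier (group_ring G)"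
  by (auto simp: gr_simps)

lemma gr_add_carrier: "a \<in> carrier (group_ring G) \<Longrightarrow> b \<in> carrier (group_ring G) \<Longrightarrow> a \<oplus>\<^bsub>group_ring G\<^esub> b \<in> carrier (group_ring G)"
  by (auto simp: gr_simps)

lemma gr_l_one: "a \<in> carrier (group_ring G) \<Longrightarrow> \<one>\<^bsub>group_ring G\<^esub> \<otimes>\<^bsub>group_ring G\<^esub> a = a"
proof (rule ext)
  fix z assume a: "a \<in> carrier (group_ring G)"
  show "(\<one>\<^bsub>group_ring G\<^esub> \<otimes>\<^bsub>group_ring G\<^esub> a) z = a z"
  proof (cases "z \<in> carrier G")
    case True
    have "(\<Sum>x\<in>carrier G. (if x = \<one>\<^bsub>G\<^esub> then 1 else 0) * a (inv\<^bsub>G\<^esub> x \<otimes>\<^bsub>G\<^esub> z))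
        = (\<Sum>x\<in>carrier G. if x = \<one>\<^bsub>G\<^esub> then a z else 0)"
      by (rule sum.cong) (use True in auto)
    also have "\<dots> = a z" using fin by (simp add: sum.delta)
    finally show ?thesis using True by (simp add: gr_simps)
  qed (use a in \<open>auto simp: gr_simps\<close>)
qed

lemma gr_r_one: "a \<in> carrier (group_ring G) \<Longrightarrow> a \<otimes>\<^bsub>group_ring G\<^esub> \<one>\<^bsub>group_ring G\<^esub> = a"
proof (rule ext)
  fix z assume a: "a \<in> carrier (group_ring G)"
  show "(a \<otimes>\<^bsub>group_ring G\<^esub> \<one>\<^bsub>group_ring G\<^esub>) z = a z"
  proof (cases "z \<in> carrier G")
    case True
    have "(\<Sum>x\<in>carrier G. a x * (if inv\<^bsub>G\<^esub> x \<otimes>\<^bsub>G\<^esub> z = \<one>\<^bsub>G\<^esub> then 1 else 0))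
        = (\<Sum>x\<in>carrier G. if x = z then a z else 0)"
    proof (rule sum.cong)
      fix x assume x: "x \<in> carrier G"
      have "(inv\<^bsub>G\<^esub> x \<otimes>\<^bsub>G\<^esub> z = \<one>\<^bsub>G\<^esub>) = (x = z)"
        using x True by (metis G.inv_closed G.inv_equality G.inv_inv G.r_inv)
      thus "a x * (if inv\<^bsub>G\<^esub> x \<otimes>\<^bsub>G\<^esub> z = \<one>\<^bsub>G\<^esub> then 1 else 0) = (if x = z then a z else 0)" by auto
    qed simp
    also have "\<dots> = a z" using fin True by (simp add: sum.delta')
    finally show ?thesis using True by (simp add: gr_simps)
  qed (use a in \<open>auto simp: gr_simps\<close>)
qed

lemma gr_monoid: "monoid (group_ring G)"
  by (rule monoidI) (auto simp: gr_mult_carrier gr_one_carrier gr_mult_assoc gr_l_one gr_r_one)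

lemma gr_abelian_group: "abelian_group (group_ring G)"
proof (rule abelian_groupI)
  fix x assume x: "x \<in> carrier (group_ring G)"
  show "\<exists>y\<in>carrier (group_ring G). y \<oplus>\<^bsub>group_ring G\<^esub> x = \<zero>\<^bsub>group_ring G\<^esub>"
    by (rule bexI[where x="\<lambda>z. - x z"]) (use x in \<open>auto simp: gr_simps\<close>)
qed (auto simp: gr_simps)

lemma gr_ring: "ring (group_ring G)"
proof (rule ringI[OF gr_abelian_group gr_monoid])
  fix x y z assume "x \<in> carrier (group_ring G)" "y \<in> carrier (group_ring G)" "z \<in> carrier (group_ring G)"
  show "(x \<oplus>\<^bsub>group_ring G\<^esub> y) \<otimes>\<^bsub>group_ring G\<^esub> z = x \<otimes>\<^bsub>group_ring G\<^esub> z \<oplus>\<^bsub>group_ring G\<^esub> y \<otimes>\<^bsub>group_ring G\<^esub> z"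
    by (rule ext) (simp add: gr_simps distrib_right sum.distrib)
  show "z \<otimes>\<^bsub>group_ring G\<^esub> (x \<oplus>\<^bsub>group_ring G\<^esub> y) = z \<otimes>\<^bsub>group_ring G\<^esub> x \<oplus>\<^bsub>group_ring G\<^esub> z \<otimes>\<^bsub>group_ring G\<^esub> y"
    by (rule ext) (simp add: gr_simps distrib_left sum.distrib)
qed

interpretation R: ring "group_ring G" by (rule gr_ring)

lemma gr_minus: "x \<in> carrier (group_ring G) \<Longrightarrow> \<ominus>\<^bsub>group_ring G\<^esub> x = (\<lambda>z. - x z)"
  by (rule R.minus_equality) (auto simp: gr_simps)

lemma gr_sub: "x \<in> carrier (group_ring G) \<Longrightarrow> y \<in> carrier (group_ring G) \<Longrightarrow> x \<ominus>\<^bsub>group_ring G\<^esub> y = (\<lambda>z. x z - y z)"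
  by (simp add: a_minus_def gr_minus gr_simps)

lemma gr_int_carrier: "gr_int G c \<in> carrier (group_ring G)"
  by (auto simp: gr_int_def gr_simps)

lemma gr_int_mult_l: "x \<in> carrier (group_ring G) \<Longrightarrow> gr_int G c \<otimes>\<^bsub>group_ring G\<^esub> x = (\<lambda>z. c * x z)"
proof (rule ext)
  fix z assume x: "x \<in> carrier (group_ring G)"
  show "(gr_int G c \<otimes>\<^bsub>group_ring G\<^esub> x) z = c * x z"
  proof (cases "z \<in> carrier G")
    case True
    have "(\<Sum>y\<in>carrier G. gr_int G c y * x (inv\<^bsub>G\<^esub> y \<otimes>\<^bsub>G\<^esub> z))
        = (\<Sum>y\<in>carrier G. if y = \<one>\<^bsub>G\<^esub> then c * x z else 0)"
      by (rule sum.cong) (use True in \<open>auto simp: gr_int_def\<close>)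
    also have "\<dots> = c * x z" using fin by (simp add: sum.delta)
    finally show ?thesis using True by (simp add: gr_simps)
  qed (use x in \<open>auto simp: gr_simps\<close>)
qed

lemma gr_int_mult_r: "x \<in> carrier (group_ring G) \<Longrightarrow> x \<otimes>\<^bsub>group_ring G\<^esub> gr_int G c = (\<lambda>z. c * x z)"
proof (rule ext)
  fix z assume x: "x \<in> carrier (group_ring G)"
  show "(x \<otimes>\<^bsub>group_ring G\<^esub> gr_int G c) z = c * x z"
  proof (cases "z \<in> carrier G")
    case True
    have "(\<Sum>y\<in>carrier G. x y * gr_int G c (inv\<^bsub>G\<^esub> y \<otimes>\<^bsub>G\<^esub> z))
        = (\<Sum>y\<in>carrier G. if y = z then c * x z else 0)"
    proof (rule sum.cong)
      fix y assume y: "y \<in> carrier G"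
      have "(inv\<^bsub>G\<^esub> y \<otimes>\<^bsub>G\<^esub> z = \<one>\<^bsub>G\<^esub>) = (y = z)"
        using y True by (metis G.inv_closed G.inv_equality G.inv_inv G.r_inv)
      thus "x y * gr_int G c (inv\<^bsub>G\<^esub> y \<otimes>\<^bsub>G\<^esub> z) = (if y = z then c * x z else 0)" by (auto simp: gr_int_def)
    qed simp
    also have "\<dots> = c * x z" using fin True by (simp add: sum.delta')
    finally show ?thesis using True by (simp add: gr_simps)
  qed (use x in \<open>auto simp: gr_simps\<close>)
qed


lemma eps_mult: "a \<in> carrier (group_ring G) \<Longrightarrow> b \<in> carrier (group_ring G) \<Longrightarrow>
   eps G (a \<otimes>\<^bsub>group_ring G\<^esub> b) = eps G a * eps G b"
proof -
  assume a: "a \<in> carrier (group_ring G)" and b: "b \<in> carrier (group_ring G)"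
  have inner: "(\<Sum>z\<in>carrier G. b (inv\<^bsub>G\<^esub> x \<otimes>\<^bsub>G\<^esub> z)) = eps G b" if x: "x \<in> carrier G" for x
    unfolding eps_def
    apply (rule sum.reindex_bij_witness[where j="\<lambda>w. inv\<^bsub>G\<^esub> x \<otimes>\<^bsub>G\<^esub> w" and i="\<lambda>y. x \<otimes>\<^bsub>G\<^esub> y"])
    using x by simp_all
  have "eps G (a \<otimes>\<^bsub>group_ring G\<^esub> b) = (\<Sum>z\<in>carrier G. \<Sum>x\<in>carrier G. a x * b (inv\<^bsub>G\<^esub> x \<otimes>\<^bsub>G\<^esub> z))"
    unfolding eps_def gr_simps(2) by (rule sum.cong) auto
  also have "\<dots> = (\<Sum>x\<in>carrier G. a x * (\<Sum>z\<in>carrier G. b (inv\<^bsub>G\<^esub> x \<otimes>\<^bsub>G\<^esub> z)))"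
    by (simp only: sum_distrib_left) (rule sum.swap)
  also have "\<dots> = (\<Sum>x\<in>carrier G. a x * eps G b)" by (simp add: inner)
  also have "\<dots> = eps G a * eps G b" by (simp add: eps_def sum_distrib_right)
  finally show ?thesis .
qed


lemma Er_ideal: "ideal (Er G r) (group_ring G)"
proof (rule idealI[OF gr_ring])
  show "subgroup (Er G r) (add_monoid (group_ring G))"
  proof (rule group.subgroupI[OF R.abelian_group_axioms[THEN abelian_group.a_group]])
    show "Er G r \<subseteq> carrier (add_monoid (group_ring G))" by (auto simp: Er_def)
    have "(\<lambda>z. 0) \<in> Er G r" by (auto simp: Er_def eps_def gr_simps)
    thus "Er G r \<noteq> {}" by blast
    fix a b assume a: "a \<in> Er G r" and b: "b \<in> Er G r"
    have ac: "a \<in> carrier (group_ring G)" using a by (simp add: Er_def)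
    have "inv\<^bsub>add_monoid (group_ring G)\<^esub> a = \<ominus>\<^bsub>group_ring G\<^esub> a" by (simp add: a_inv_def)
    also have "\<dots> = (\<lambda>z. - a z)" using ac by (rule gr_minus)
    finally show "inv\<^bsub>add_monoid (group_ring G)\<^esub> a \<in> Er G r"
      using a by (auto simp: Er_def eps_def sum_negf gr_simps)
    show "a \<otimes>\<^bsub>add_monoid (group_ring G)\<^esub> b \<in> Er G r"
      using a b by (auto simp: Er_def eps_def sum.distrib gr_simps)
  qed
next
  fix a x assume a: "a \<in> Er G r" and x: "x \<in> carrier (group_ring G)"
  show "x \<otimes>\<^bsub>group_ring G\<^esub> a \<in> Er G r" "a \<otimes>\<^bsub>group_ring G\<^esub> x \<in> Er G r"
    using a x by (auto simp: Er_def eps_mult gr_mult_carrier)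
qed

lemma aug_ideal_r_eq: "aug_ideal_r G r = Er G r"
proof
  show "aug_ideal_r G r \<subseteq> Er G r"
    unfolding aug_ideal_r_def
    by (rule R.genideal_minimal[OF Er_ideal])
       (auto simp: augmentation_ideal_def Er_def eps_def gr_int_carrier, simp add: gr_int_def fin sum.delta)
next
  show "Er G r \<subseteq> aug_ideal_r G r"
  proof
    fix a assume a: "a \<in> Er G r"
    then obtain k where k: "eps G a = r * k" by (auto simp: Er_def)
    have ac: "a \<in> carrier (group_ring G)" using a by (simp add: Er_def)
    have S: "augmentation_ideal G \<union> {gr_int G r} \<subseteq> carrier (group_ring G)"
      by (auto simp: augmentation_ideal_def gr_int_carrier)
    interpret I: ideal "aug_ideal_r G r" "group_ring G"
      unfolding aug_ideal_r_def by (rule R.genideal_ideal[OF S])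
    have self: "augmentation_ideal G \<union> {gr_int G r} \<subseteq> aug_ideal_r G r"
      unfolding aug_ideal_r_def by (rule R.genideal_self[OF S])
    have e_gi: "eps G (gr_int G c) = c" for c
      by (simp add: eps_def gr_int_def fin sum.delta)
    have 1: "gr_int G k \<otimes>\<^bsub>group_ring G\<^esub> gr_int G r \<in> aug_ideal_r G r"
      using self by (intro I.I_l_closed) (auto simp: gr_int_carrier)
    have 2: "gr_int G k \<otimes>\<^bsub>group_ring G\<^esub> gr_int G r = gr_int G (r * k)"
      by (simp add: gr_int_mult_l gr_int_carrier) (auto simp: gr_int_def)
    have "eps G (\<lambda>z. a z - gr_int G (r * k) z) = 0"
      using k e_gi[of "r*k"] unfolding eps_def by (simp add: sum_subtractf)
    hence 3: "(\<lambda>z. a z - gr_int G (r * k) z) \<in> augmentation_ideal G"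
      using ac by (auto simp: augmentation_ideal_def gr_simps gr_int_def eps_def)
    have "a = (\<lambda>z. a z - gr_int G (r * k) z) \<oplus>\<^bsub>group_ring G\<^esub> (gr_int G k \<otimes>\<^bsub>group_ring G\<^esub> gr_int G r)"
      by (subst 2) (simp add: gr_simps)
    also have "\<dots> \<in> aug_ideal_r G r"
      using 1 3 self by (intro I.a_closed) auto
    finally show "a \<in> aug_ideal_r G r" .
  qed
qed


lemma gr_e_carrier: "g \<in> carrier G \<Longrightarrow> gr_e g \<in> carrier (group_ring G)"
  by (auto simp: gr_e_def gr_simps)

lemma gr_e_one: "gr_e \<one>\<^bsub>G\<^esub> = \<one>\<^bsub>group_ring G\<^esub>"
  by (simp add: gr_e_def gr_simps)

lemma gr_e_mult_l: "x \<in> carrier G \<Longrightarrow> gr_e x \<otimes>\<^bsub>group_ring G\<^esub> b = (\<lambda>z. if z \<in> carrier G then b (inv\<^bsub>G\<^esub> x \<otimes>\<^bsub>G\<^esub> z) else 0)"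
proof (rule ext)
  fix z assume x: "x \<in> carrier G"
  show "(gr_e x \<otimes>\<^bsub>group_ring G\<^esub> b) z = (if z \<in> carrier G then b (inv\<^bsub>G\<^esub> x \<otimes>\<^bsub>G\<^esub> z) else 0)"
  proof (cases "z \<in> carrier G")
    case True
    have "(\<Sum>y\<in>carrier G. gr_e x y * b (inv\<^bsub>G\<^esub> y \<otimes>\<^bsub>G\<^esub> z))
        = (\<Sum>y\<in>carrier G. if y = x then b (inv\<^bsub>G\<^esub> x \<otimes>\<^bsub>G\<^esub> z) else 0)"
      by (rule sum.cong) (auto simp: gr_e_def)
    also have "\<dots> = b (inv\<^bsub>G\<^esub> x \<otimes>\<^bsub>G\<^esub> z)" using fin x by (simp add: sum.delta')
    finally show ?thesis using True unfolding gr_simps(2) by simp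
  qed (simp add: gr_simps)
qed

lemma gr_e_mult: "x \<in> carrier G \<Longrightarrow> y \<in> carrier G \<Longrightarrow> gr_e x \<otimes>\<^bsub>group_ring G\<^esub> gr_e y = gr_e (x \<otimes>\<^bsub>G\<^esub> y)"
proof (rule ext)
  fix z assume x: "x \<in> carrier G" and y: "y \<in> carrier G"
  show "(gr_e x \<otimes>\<^bsub>group_ring G\<^esub> gr_e y) z = gr_e (x \<otimes>\<^bsub>G\<^esub> y) z"
  proof (cases "z \<in> carrier G")
    case True
    have "(inv\<^bsub>G\<^esub> x \<otimes>\<^bsub>G\<^esub> z = y) = (z = x \<otimes>\<^bsub>G\<^esub> y)"
      using x y True by (metis Gc1 Gc2 G.inv_closed G.m_closed)
    thus ?thesis using True x unfolding gr_e_mult_l[OF x] by (simp add: gr_e_def)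
  next
    case False
    thus ?thesis using x y unfolding gr_e_mult_l[OF x] by (auto simp: gr_e_def)
  qed
qed

lemma eps_e: "g \<in> carrier G \<Longrightarrow> eps G (gr_e g) = 1"
  using fin by (simp add: eps_def gr_e_def sum.delta')

lemma Er_zero: "(\<lambda>z. 0) \<in> Er G r"
  by (auto simp: Er_def eps_def gr_simps)

lemma Er_add: "a \<in> Er G r \<Longrightarrow> b \<in> Er G r \<Longrightarrow> (\<lambda>z. a z + b z) \<in> Er G r"
  by (auto simp: Er_def eps_def gr_simps sum.distrib)

lemma Er_diff: "a \<in> Er G r \<Longrightarrow> b \<in> Er G r \<Longrightarrow> (\<lambda>z. a z - b z) \<in> Er G r"
  by (auto simp: Er_def eps_def gr_simps sum_subtractf)

lemma Er_scal: "a \<in> Er G r \<Longrightarrow> (\<lambda>z. c * a z) \<in> Er G r"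
  by (auto simp: Er_def eps_def gr_simps sum_distrib_left[symmetric])

lemma Er_sum: "finite S \<Longrightarrow> (\<And>p. p \<in> S \<Longrightarrow> x p \<in> Er G r) \<Longrightarrow> (\<lambda>z. \<Sum>p\<in>S. c p * x p z) \<in> Er G r"
proof (induction S rule: finite_induct)
  case empty thus ?case by (simp add: Er_zero)
next
  case (insert a S)
  have "(\<lambda>z. c a * x a z + (\<Sum>p\<in>S. c p * x p z)) \<in> Er G r"
    using insert by (intro Er_add Er_scal) auto
  thus ?case using insert by simp
qed

lemma Er_carrier: "a \<in> Er G r \<Longrightarrow> a \<in> carrier (group_ring G)"
  by (simp add: Er_def)

lemma Er_e_diff: "x \<in> carrier G \<Longrightarrow> y \<in> carrier G \<Longrightarrow> (\<lambda>z. gr_e x z - gr_e y z) \<in> Er G r"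
  using eps_e[of x] eps_e[of y] by (auto simp: Er_def gr_simps gr_e_def eps_def sum_subtractf)

lemma Er_mult: "a \<in> Er G r \<Longrightarrow> x \<in> carrier (group_ring G) \<Longrightarrow> x \<otimes>\<^bsub>group_ring G\<^esub> a \<in> Er G r"
  using Er_ideal by (rule ideal.I_l_closed)

lemma Er_mult_r: "a \<in> Er G r \<Longrightarrow> x \<in> carrier (group_ring G) \<Longrightarrow> a \<otimes>\<^bsub>group_ring G\<^esub> x \<in> Er G r"
  using Er_ideal by (rule ideal.I_r_closed)

lemma gr_int_Er: "gr_int G r \<in> Er G r"
  using fin by (auto simp: Er_def gr_simps eps_def gr_int_def sum.delta)

lemma gr_mult_diff_l: "a \<in> carrier (group_ring G) \<Longrightarrow> b \<in> carrier (group_ring G) \<Longrightarrow> c \<in> carrier (group_ring G) \<Longrightarrow>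
   (\<lambda>z. a z - b z) \<otimes>\<^bsub>group_ring G\<^esub> c = (\<lambda>z. (a \<otimes>\<^bsub>group_ring G\<^esub> c) z - (b \<otimes>\<^bsub>group_ring G\<^esub> c) z)"
  by (rule ext) (simp add: gr_simps sum_subtractf left_diff_distrib)

lemma gr_mult_add_l: "(\<lambda>z. a z + b z) \<otimes>\<^bsub>group_ring G\<^esub> c = (\<lambda>z. (a \<otimes>\<^bsub>group_ring G\<^esub> c) z + (b \<otimes>\<^bsub>group_ring G\<^esub> c) z)"
  by (rule ext) (simp add: gr_simps sum.distrib distrib_right)

lemma gr_mult_diff_r: "(c \<otimes>\<^bsub>group_ring G\<^esub> (\<lambda>z. a z - b z)) = (\<lambda>z. (c \<otimes>\<^bsub>group_ring G\<^esub> a) z - (c \<otimes>\<^bsub>group_ring G\<^esub> b) z)"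
  by (rule ext) (simp add: gr_simps sum_subtractf right_diff_distrib)

end

context
  fixes G :: "('g, 'm) monoid_scheme" and H :: "('h, 'n) monoid_scheme" and f :: "'g \<Rightarrow> 'h"
  assumes gG: "group G" and gH: "group H" and fG: "finite (carrier G)" and fH: "finite (carrier H)"
    and hom: "f \<in> hom G H" and surj: "f ` carrier G = carrier H"
begin

interpretation G: group G by (rule gG)
interpretation H: group H by (rule gH)
interpretation RG: ring "group_ring G" by (rule gr_ring[OF gG fG])
interpretation RH: ring "group_ring H" by (rule gr_ring[OF gH fH])
interpretation fh: group_hom G H f by (intro group_hom.intro group_hom_axioms.intro gG gH hom)

abbreviation "F \<equiv> group_ring_map G H f"

lemma f_in: "g \<in> carrier G \<Longrightarrow> f g \<in> carrier H"
  using hom by (auto simp: hom_def)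

lemma F_carrier: "F a \<in> carrier (group_ring H)"
  by (auto simp: group_ring_map_def gr_simps)

lemma F_ind: "h \<in> carrier H \<Longrightarrow> F c h = (\<Sum>z\<in>carrier G. c z * (if f z = h then 1 else 0))"
  unfolding group_ring_map_def using fG by (simp add: sum.inter_filter if_distrib[of "(*) _"] cong: if_cong)

lemma F_fiber: "(\<Sum>g\<in>carrier G. a g * \<psi> (f g)) = (\<Sum>h\<in>carrier H. F a h * \<psi> h)"
proof -
  have 1: "F a h * \<psi> h = (\<Sum>g\<in>{g. g \<in> carrier G \<and> f g = h}. a g * \<psi> (f g))" if h: "h \<in> carrier H" for h
  proof -
    have "F a h * \<psi> h = (\<Sum>g\<in>{g. g \<in> carrier G \<and> f g = h}. a g) * \<psi> h"
      using h by (simp add: group_ring_map_def)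
    also have "\<dots> = (\<Sum>g\<in>{g. g \<in> carrier G \<and> f g = h}. a g * \<psi> h)"
      by (rule sum_distrib_right)
    also have "\<dots> = (\<Sum>g\<in>{g. g \<in> carrier G \<and> f g = h}. a g * \<psi> (f g))"
      by (rule sum.cong) auto
    finally show ?thesis .
  qed
  have "(\<Sum>h\<in>carrier H. F a h * \<psi> h) = (\<Sum>h\<in>carrier H. \<Sum>g\<in>{g. g \<in> carrier G \<and> f g = h}. a g * \<psi> (f g))"
    by (rule sum.cong) (simp_all add: 1)
  also have "\<dots> = (\<Sum>g\<in>carrier G. a g * \<psi> (f g))"
    by (rule sum.group[OF fG fH]) (use f_in in blast)
  finally show ?thesis by simp
qed

lemma eps_F: "eps H (F a) = eps G a"
  using F_fiber[of a "\<lambda>_. 1"] by (simp add: eps_def)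

lemma F_add: "F (\<lambda>z. a z + b z) = (\<lambda>h. F a h + F b h)"
  by (rule ext) (simp add: group_ring_map_def sum.distrib)

lemma F_diff: "F (\<lambda>z. a z - b z) = (\<lambda>h. F a h - F b h)"
  by (rule ext) (simp add: group_ring_map_def sum_subtractf)

lemma F_scal: "F (\<lambda>z. c * a z) = (\<lambda>h. c * F a h)"
  by (rule ext) (simp add: group_ring_map_def sum_distrib_left)

lemma F_e: "g \<in> carrier G \<Longrightarrow> F (gr_e g) = gr_e (f g)"
proof (rule ext)
  fix h assume g: "g \<in> carrier G"
  show "F (gr_e g) h = gr_e (f g) h"
  proof (cases "h \<in> carrier H")
    case True
    have "F (gr_e g) h = (\<Sum>z\<in>carrier G. if z = g then (if f g = h then 1 else 0) else 0)"
      unfolding F_ind[OF True] by (rule sum.cong) (simp_all add: gr_e_def)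
    also have "\<dots> = gr_e (f g) h" using fG g by (simp add: sum.delta' gr_e_def)
    finally show ?thesis .
  next
    case False
    thus ?thesis using f_in[OF g] by (auto simp: group_ring_map_def gr_e_def)
  qed
qed

lemma F_one: "F \<one>\<^bsub>group_ring G\<^esub> = \<one>\<^bsub>group_ring H\<^esub>"
proof -
  have "F \<one>\<^bsub>group_ring G\<^esub> = F (gr_e \<one>\<^bsub>G\<^esub>)" by (simp only: gr_e_one[OF gG fG])
  also have "\<dots> = gr_e (f \<one>\<^bsub>G\<^esub>)" by (rule F_e) simp
  also have "\<dots> = gr_e \<one>\<^bsub>H\<^esub>" by (simp only: fh.hom_one)
  also have "\<dots> = \<one>\<^bsub>group_ring H\<^esub>" by (rule gr_e_one[OF gH fH])
  finally show ?thesis .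
qed

definition sec :: "'h \<Rightarrow> 'g" where "sec h = (SOME g. g \<in> carrier G \<and> f g = h)"

lemma sec: "h \<in> carrier H \<Longrightarrow> sec h \<in> carrier G \<and> f (sec h) = h"
proof -
  assume h: "h \<in> carrier H"
  hence "h \<in> f ` carrier G" by (simp add: surj)
  then obtain g where "g \<in> carrier G" "f g = h" by (rule imageE) simp
  hence "\<exists>g. g \<in> carrier G \<and> f g = h" by blast
  thus ?thesis unfolding sec_def by (rule someI_ex)
qed

definition lift :: "('h \<Rightarrow> int) \<Rightarrow> ('g \<Rightarrow> int)" where
  "lift a = (\<lambda>g. if g \<in> carrier G \<and> g = sec (f g) then a (f g) else 0)"

lemma lift_carrier: "lift a \<in> carrier (group_ring G)"
  by (auto simp: lift_def gr_simps)

lemma F_lift: "a \<in> carrier (group_ring H) \<Longrightarrow> F (lift a) = a"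
proof (rule ext)
  fix h assume a: "a \<in> carrier (group_ring H)"
  show "F (lift a) h = a h"
  proof (cases "h \<in> carrier H")
    case True
    have "F (lift a) h = (\<Sum>z\<in>carrier G. if z = sec h then a h else 0)"
    proof (unfold F_ind[OF True], rule sum.cong)
      fix z assume z: "z \<in> carrier G"
      have "(z = sec (f z) \<and> f z = h) = (z = sec h)"
      proof
        assume "z = sec h"
        moreover hence "f z = h" using sec[OF True] by simp
        ultimately show "z = sec (f z) \<and> f z = h" by simp
      next
        assume a: "z = sec (f z) \<and> f z = h"
        hence e: "sec (f z) = sec h" by simp
        from a have "z = sec (f z)" by (rule conjunct1)
        thus "z = sec h" using e by (rule trans)
      qed
      thus "lift a z * (if f z = h then 1 else 0) = (if z = sec h then a h else 0)"
        unfolding lift_def using z by auto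
    qed simp
    also have "\<dots> = a h" using fG sec[OF True] by (simp add: sum.delta')
    finally show ?thesis .
  next
    case False
    thus ?thesis using a by (auto simp: group_ring_map_def gr_simps)
  qed
qed

lemma F_mult:
  assumes a: "a \<in> carrier (group_ring G)" and b: "b \<in> carrier (group_ring G)"
  shows "F (a \<otimes>\<^bsub>group_ring G\<^esub> b) = F a \<otimes>\<^bsub>group_ring H\<^esub> F b"
proof (rule ext)
  fix h
  show "F (a \<otimes>\<^bsub>group_ring G\<^esub> b) h = (F a \<otimes>\<^bsub>group_ring H\<^esub> F b) h"
  proof (cases "h \<in> carrier H")
    case False thus ?thesis by (simp add: group_ring_map_def gr_simps)
  next
    case h: True
    have inner: "(\<Sum>z\<in>carrier G. b (inv\<^bsub>G\<^esub> x \<otimes>\<^bsub>G\<^esub> z) * (if f z = h then 1 else 0))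
       = F b (inv\<^bsub>H\<^esub> f x \<otimes>\<^bsub>H\<^esub> h)" if x: "x \<in> carrier G" for x
    proof -
      have "(\<Sum>z\<in>carrier G. b (inv\<^bsub>G\<^esub> x \<otimes>\<^bsub>G\<^esub> z) * (if f z = h then 1 else 0))
          = (\<Sum>y\<in>carrier G. b y * (if f y = inv\<^bsub>H\<^esub> f x \<otimes>\<^bsub>H\<^esub> h then 1 else 0))"
      proof (rule sum.reindex_bij_witness[where j="\<lambda>z. inv\<^bsub>G\<^esub> x \<otimes>\<^bsub>G\<^esub> z" and i="\<lambda>y. x \<otimes>\<^bsub>G\<^esub> y"])
        fix z assume z: "z \<in> carrier G"
        have "(f z = h) = (f (inv\<^bsub>G\<^esub> x \<otimes>\<^bsub>G\<^esub> z) = inv\<^bsub>H\<^esub> f x \<otimes>\<^bsub>H\<^esub> h)"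
        proof -
          have "f (inv\<^bsub>G\<^esub> x \<otimes>\<^bsub>G\<^esub> z) = inv\<^bsub>H\<^esub> f x \<otimes>\<^bsub>H\<^esub> f z"
            using x z by (simp add: fh.hom_mult fh.hom_inv)
          moreover have "(f z = h) = (inv\<^bsub>H\<^esub> f x \<otimes>\<^bsub>H\<^esub> f z = inv\<^bsub>H\<^esub> f x \<otimes>\<^bsub>H\<^esub> h)"
            using x z h f_in by (simp add: H.l_cancel)
          ultimately show ?thesis by simp
        qed
        thus "b (inv\<^bsub>G\<^esub> x \<otimes>\<^bsub>G\<^esub> z) * (if f (inv\<^bsub>G\<^esub> x \<otimes>\<^bsub>G\<^esub> z) = inv\<^bsub>H\<^esub> f x \<otimes>\<^bsub>H\<^esub> h then 1 else 0)
           = b (inv\<^bsub>G\<^esub> x \<otimes>\<^bsub>G\<^esub> z) * (if f z = h then 1 else 0)"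
          by simp
      qed (use x in \<open>simp_all add: Gc1[OF gG fG] Gc2[OF gG fG]\<close>)
      also have "\<dots> = F b (inv\<^bsub>H\<^esub> f x \<otimes>\<^bsub>H\<^esub> h)"
        using x h f_in by (simp add: F_ind)
      finally show ?thesis .
    qed
    have "F (a \<otimes>\<^bsub>group_ring G\<^esub> b) h = (\<Sum>z\<in>carrier G. (\<Sum>x\<in>carrier G. a x * b (inv\<^bsub>G\<^esub> x \<otimes>\<^bsub>G\<^esub> z)) * (if f z = h then 1 else 0))"
      unfolding F_ind[OF h] unfolding gr_simps(2) by (auto intro!: sum.cong)
    also have "\<dots> = (\<Sum>x\<in>carrier G. a x * (\<Sum>z\<in>carrier G. b (inv\<^bsub>G\<^esub> x \<otimes>\<^bsub>G\<^esub> z) * (if f z = h then 1 else 0)))"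
      by (simp only: sum_distrib_left sum_distrib_right mult.assoc) (rule sum.swap)
    also have "\<dots> = (\<Sum>x\<in>carrier G. a x * F b (inv\<^bsub>H\<^esub> f x \<otimes>\<^bsub>H\<^esub> h))"
      by (rule sum.cong) (simp_all add: inner)
    also have "\<dots> = (\<Sum>k\<in>carrier H. F a k * F b (inv\<^bsub>H\<^esub> k \<otimes>\<^bsub>H\<^esub> h))"
      by (rule F_fiber)
    also have "\<dots> = (F a \<otimes>\<^bsub>group_ring H\<^esub> F b) h"
      using h unfolding gr_simps(2) by simp
    finally show ?thesis .
  qed
qed


definition T :: "('h \<Rightarrow> int) \<times> ('g \<Rightarrow> int) \<Rightarrow> ('h \<Rightarrow> int)" where
  "T p = fst p \<otimes>\<^bsub>group_ring H\<^esub> F (snd p)"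

definition Phi :: "('h, 'g) free_elem \<Rightarrow> ('h \<Rightarrow> int)" where
  "Phi u = (\<lambda>h. \<Sum>p\<in>{p. u p \<noteq> 0}. u p * T p h)"

lemma Phi_sum: "finite S \<Longrightarrow> {p. u p \<noteq> 0} \<subseteq> S \<Longrightarrow> Phi u = (\<lambda>h. \<Sum>p\<in>S. u p * T p h)"
  unfolding Phi_def by (rule ext, rule sum.mono_neutral_left) auto

lemma supp_add: "{p. free_add u v p \<noteq> 0} \<subseteq> {p. u p \<noteq> 0} \<union> {p. v p \<noteq> 0}"
  by (auto simp: free_add_def)

lemma supp_neg: "{p. free_neg u p \<noteq> 0} = {p. u p \<noteq> 0}"
  by (auto simp: free_neg_def)

lemma supp_delta: "{p. free_delta q p \<noteq> 0} = {q}"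
  by (auto simp: free_delta_def)

lemma Phi_add: "finite {p. u p \<noteq> 0} \<Longrightarrow> finite {p. v p \<noteq> 0} \<Longrightarrow>
    Phi (free_add u v) = (\<lambda>h. Phi u h + Phi v h)"
proof -
  assume fu: "finite {p. u p \<noteq> 0}" and fv: "finite {p. v p \<noteq> 0}"
  let ?S = "{p. u p \<noteq> 0} \<union> {p. v p \<noteq> 0}"
  have fS: "finite ?S" using fu fv by simp
  have "Phi (free_add u v) = (\<lambda>h. \<Sum>p\<in>?S. free_add u v p * T p h)"
    by (rule Phi_sum[OF fS supp_add])
  also have "\<dots> = (\<lambda>h. (\<Sum>p\<in>?S. u p * T p h) + (\<Sum>p\<in>?S. v p * T p h))"
    by (simp add: free_add_def distrib_right sum.distrib)
  also have "\<dots> = (\<lambda>h. Phi u h + Phi v h)"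
    by (simp add: Phi_sum[OF fS, of u] Phi_sum[OF fS, of v])
  finally show ?thesis .
qed

lemma Phi_neg: "Phi (free_neg u) = (\<lambda>h. - Phi u h)"
  by (simp add: Phi_def supp_neg) (simp add: free_neg_def sum_negf)

lemma Phi_delta: "Phi (free_delta q) = T q"
  by (simp add: Phi_def supp_delta) (simp add: free_delta_def)

lemma Phi_zero: "Phi (\<lambda>p. 0) = (\<lambda>h. 0)"
  by (simp add: Phi_def)

lemma T_carrier: "T p \<in> carrier (group_ring H)"
  unfolding T_def by (rule gr_mult_carrier[OF gH fH])

context
  fixes r :: int
begin

abbreviation "MM \<equiv> aug_ideal_r G r"
abbreviation "AA \<equiv> carrier (group_ring H)"
abbreviation "Rl \<equiv> tensor_relations G H f MM"
abbreviation "cls \<equiv> tensor_class G H f MM"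

lemma MM_eq: "MM = Er G r"
  by (rule aug_ideal_r_eq[OF gG fG])

lemma MM_carrier: "m \<in> MM \<Longrightarrow> m \<in> carrier (group_ring G)"
  using MM_eq Er_carrier[OF gG fG] by blast

lemma MM_add: "m \<in> MM \<Longrightarrow> m' \<in> MM \<Longrightarrow> m \<oplus>\<^bsub>group_ring G\<^esub> m' \<in> MM"
  unfolding MM_eq gr_simps(5) by (rule Er_add[OF gG fG])

lemma MM_mult: "m \<in> MM \<Longrightarrow> x \<in> carrier (group_ring G) \<Longrightarrow> x \<otimes>\<^bsub>group_ring G\<^esub> m \<in> MM"
  unfolding MM_eq by (rule Er_mult[OF gG fG])

lemma fc_delta: "fst q \<in> AA \<Longrightarrow> snd q \<in> MM \<Longrightarrow> free_delta q \<in> free_carrier AA MM"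
  by (cases q) (simp add: free_carrier_def supp_delta)

lemma fc_add: "u \<in> free_carrier AA MM \<Longrightarrow> v \<in> free_carrier AA MM \<Longrightarrow> free_add u v \<in> free_carrier AA MM"
  unfolding free_carrier_def using supp_add[of u v] by (blast intro: finite_subset)

lemma fc_neg: "u \<in> free_carrier AA MM \<Longrightarrow> free_neg u \<in> free_carrier AA MM"
  by (simp add: free_carrier_def supp_neg)

lemma fc_fin: "u \<in> free_carrier AA MM \<Longrightarrow> finite {p. u p \<noteq> 0}"
  by (simp add: free_carrier_def)

lemma Phi_add': "u \<in> free_carrier AA MM \<Longrightarrow> v \<in> free_carrier AA MM \<Longrightarrow> Phi (free_add u v) = (\<lambda>h. Phi u h + Phi v h)"
  by (rule Phi_add) (simp_all add: fc_fin)

lemma gen1_ok: "a \<in> AA \<Longrightarrow> a' \<in> AA \<Longrightarrow> m \<in> MM \<Longrightarrow>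
   free_add (free_delta (a \<oplus>\<^bsub>group_ring H\<^esub> a', m)) (free_neg (free_add (free_delta (a, m)) (free_delta (a', m))))
     \<in> free_carrier AA MM \<and>
   Phi (free_add (free_delta (a \<oplus>\<^bsub>group_ring H\<^esub> a', m)) (free_neg (free_add (free_delta (a, m)) (free_delta (a', m)))))
     = (\<lambda>h. 0)"
proof -
  assume a: "a \<in> AA" and a': "a' \<in> AA" and m: "m \<in> MM"
  have aa: "a \<oplus>\<^bsub>group_ring H\<^esub> a' \<in> AA" using a a' by simp
  have d1: "free_delta (a \<oplus>\<^bsub>group_ring H\<^esub> a', m) \<in> free_carrier AA MM" using aa m by (simp add: fc_delta)
  have d2: "free_delta (a, m) \<in> free_carrier AA MM" using a m by (simp add: fc_delta)
  have d3: "free_delta (a', m) \<in> free_carrier AA MM" using a' m by (simp add: fc_delta)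
  have T1: "T (a \<oplus>\<^bsub>group_ring H\<^esub> a', m) = (\<lambda>h. T (a, m) h + T (a', m) h)"
  proof -
    have "(a \<oplus>\<^bsub>group_ring H\<^esub> a') \<otimes>\<^bsub>group_ring H\<^esub> F m = a \<otimes>\<^bsub>group_ring H\<^esub> F m \<oplus>\<^bsub>group_ring H\<^esub> a' \<otimes>\<^bsub>group_ring H\<^esub> F m"
      by (rule RH.l_distr[OF a a' F_carrier])
    thus ?thesis unfolding T_def gr_simps(5) by simp
  qed
  show ?thesis
    using d1 d2 d3 by (simp add: fc_add fc_neg Phi_add' Phi_neg Phi_delta T1)
qed

lemma gen2_ok: "a \<in> AA \<Longrightarrow> m \<in> MM \<Longrightarrow> m' \<in> MM \<Longrightarrow>
   free_add (free_delta (a, m \<oplus>\<^bsub>group_ring G\<^esub> m')) (free_neg (free_add (free_delta (a, m)) (free_delta (a, m'))))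
     \<in> free_carrier AA MM \<and>
   Phi (free_add (free_delta (a, m \<oplus>\<^bsub>group_ring G\<^esub> m')) (free_neg (free_add (free_delta (a, m)) (free_delta (a, m')))))
     = (\<lambda>h. 0)"
proof -
  assume a: "a \<in> AA" and m: "m \<in> MM" and m': "m' \<in> MM"
  have d1: "free_delta (a, m \<oplus>\<^bsub>group_ring G\<^esub> m') \<in> free_carrier AA MM" using a m m' by (simp add: fc_delta MM_add)
  have d2: "free_delta (a, m) \<in> free_carrier AA MM" using a m by (simp add: fc_delta)
  have d3: "free_delta (a, m') \<in> free_carrier AA MM" using a m' by (simp add: fc_delta)
  have "F (m \<oplus>\<^bsub>group_ring G\<^esub> m') = F m \<oplus>\<^bsub>group_ring H\<^esub> F m'"
    by (simp add: gr_simps(5) F_add)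
  hence T1: "T (a, m \<oplus>\<^bsub>group_ring G\<^esub> m') = (\<lambda>h. T (a, m) h + T (a, m') h)"
  proof -
    have "a \<otimes>\<^bsub>group_ring H\<^esub> (F m \<oplus>\<^bsub>group_ring H\<^esub> F m') = a \<otimes>\<^bsub>group_ring H\<^esub> F m \<oplus>\<^bsub>group_ring H\<^esub> a \<otimes>\<^bsub>group_ring H\<^esub> F m'"
      by (rule RH.r_distr[OF F_carrier F_carrier a])
    with \<open>F (m \<oplus>\<^bsub>group_ring G\<^esub> m') = F m \<oplus>\<^bsub>group_ring H\<^esub> F m'\<close> show ?thesis
      unfolding T_def by (simp add: gr_simps(5))
  qed
  show ?thesis
    using d1 d2 d3 by (simp add: fc_add fc_neg Phi_add' Phi_neg Phi_delta T1)
qed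

lemma gen3_ok: "a \<in> AA \<Longrightarrow> x \<in> carrier (group_ring G) \<Longrightarrow> m \<in> MM \<Longrightarrow>
   free_add (free_delta (a \<otimes>\<^bsub>group_ring H\<^esub> F x, m)) (free_neg (free_delta (a, x \<otimes>\<^bsub>group_ring G\<^esub> m)))
     \<in> free_carrier AA MM \<and>
   Phi (free_add (free_delta (a \<otimes>\<^bsub>group_ring H\<^esub> F x, m)) (free_neg (free_delta (a, x \<otimes>\<^bsub>group_ring G\<^esub> m))))
     = (\<lambda>h. 0)"
proof -
  assume a: "a \<in> AA" and x: "x \<in> carrier (group_ring G)" and m: "m \<in> MM"
  have d1: "free_delta (a \<otimes>\<^bsub>group_ring H\<^esub> F x, m) \<in> free_carrier AA MM"
    using m by (simp add: fc_delta gr_mult_carrier[OF gH fH])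
  have d2: "free_delta (a, x \<otimes>\<^bsub>group_ring G\<^esub> m) \<in> free_carrier AA MM" using a m x by (simp add: fc_delta MM_mult)
  have T1: "T (a \<otimes>\<^bsub>group_ring H\<^esub> F x, m) = T (a, x \<otimes>\<^bsub>group_ring G\<^esub> m)"
    unfolding T_def using a x m F_carrier MM_carrier by (simp add: RH.m_assoc F_mult)
  show ?thesis
    using d1 d2 by (simp add: fc_add fc_neg Phi_add' Phi_neg Phi_delta T1)
qed

lemma gen_in_fc: "u \<in> tensor_generators G H f MM \<Longrightarrow> u \<in> free_carrier AA MM \<and> Phi u = (\<lambda>h. 0)"
  unfolding tensor_generators_def Un_iff mem_Collect_eq
  by (elim disjE exE conjE) (simp_all only: gen1_ok gen2_ok gen3_ok)

lemma Rl_props: "u \<in> Rl \<Longrightarrow> u \<in> free_carrier AA MM \<and> Phi u = (\<lambda>h. 0)"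
proof (induction rule: tensor_relations.induct)
  case rel_zero thus ?case by (simp add: free_carrier_def Phi_zero)
next
  case (rel_gen u) thus ?case by (rule gen_in_fc)
next
  case (rel_add u v)
  thus ?case
    using supp_add[of u v] finite_subset[OF supp_add[of u v]]
    by (auto simp: free_carrier_def Phi_add)
next
  case (rel_neg u)
  thus ?case by (simp add: free_carrier_def supp_neg Phi_neg)
qed

lemma Rl_add: "u \<in> Rl \<Longrightarrow> v \<in> Rl \<Longrightarrow> (\<lambda>p. u p + v p) \<in> Rl"
  using tensor_relations.rel_add[of u G H f MM v] unfolding free_add_def .

lemma Rl_neg: "u \<in> Rl \<Longrightarrow> (\<lambda>p. - u p) \<in> Rl"
  using tensor_relations.rel_neg[of u G H f MM] unfolding free_neg_def .

lemma Rl_zero: "(\<lambda>p. 0) \<in> Rl"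
  by (rule tensor_relations.rel_zero)

lemma Rl_diff: "u \<in> Rl \<Longrightarrow> v \<in> Rl \<Longrightarrow> (\<lambda>p. u p - v p) \<in> Rl"
  using Rl_add[of u "\<lambda>p. - v p"] Rl_neg[of v] by simp

lemma Rl_cong: "u \<in> Rl \<Longrightarrow> u = v \<Longrightarrow> v \<in> Rl"
  by simp

lemma Rl_scal: "u \<in> Rl \<Longrightarrow> (\<lambda>p. c * u p) \<in> Rl"
proof (induction c rule: int_induct[where k=0])
  case base thus ?case by (simp add: Rl_zero)
next
  case (step1 i)
  hence "(\<lambda>p. i * u p + u p) \<in> Rl" by (intro Rl_add) auto
  thus ?case by (simp add: distrib_right)
next
  case (step2 i)
  hence "(\<lambda>p. i * u p - u p) \<in> Rl" by (intro Rl_diff) auto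
  thus ?case by (simp add: left_diff_distrib)
qed

lemma Rl_sum: "finite S \<Longrightarrow> (\<And>i. i \<in> S \<Longrightarrow> u i \<in> Rl) \<Longrightarrow> (\<lambda>p. \<Sum>i\<in>S. c i * u i p) \<in> Rl"
proof (induction S rule: finite_induct)
  case empty thus ?case by (simp add: Rl_zero)
next
  case (insert a S)
  have "(\<lambda>p. c a * u a p + (\<Sum>i\<in>S. c i * u i p)) \<in> Rl"
    using insert by (intro Rl_add Rl_scal) auto
  thus ?case using insert by simp
qed

definition req :: "('h, 'g) free_elem \<Rightarrow> ('h, 'g) free_elem \<Rightarrow> bool" where
  "req u v \<longleftrightarrow> (\<lambda>p. u p - v p) \<in> Rl"

lemma req_refl: "req u u"
  by (simp add: req_def Rl_zero)

lemma req_sym: "req u v \<Longrightarrow> req v u"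
  unfolding req_def by (drule Rl_neg) simp

lemma req_trans: "req u v \<Longrightarrow> req v w \<Longrightarrow> req u w"
  unfolding req_def by (drule (1) Rl_add) simp

lemma req_add: "req u1 v1 \<Longrightarrow> req u2 v2 \<Longrightarrow> req (\<lambda>p. u1 p + u2 p) (\<lambda>p. v1 p + v2 p)"
  unfolding req_def by (drule (1) Rl_add) (simp add: algebra_simps)

lemma req_scal: "req u v \<Longrightarrow> req (\<lambda>p. c * u p) (\<lambda>p. c * v p)"
  unfolding req_def by (drule Rl_scal[where c=c]) (simp add: algebra_simps)

lemma req_Rl: "req u (\<lambda>p. 0) \<longleftrightarrow> u \<in> Rl"
  by (simp add: req_def)

lemma req_Rl2: "req u v \<Longrightarrow> v \<in> Rl \<Longrightarrow> u \<in> Rl"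
  using req_trans req_Rl by blast

lemma Phi_req: "u \<in> free_carrier AA MM \<Longrightarrow> v \<in> free_carrier AA MM \<Longrightarrow> req u v \<Longrightarrow> Phi u = Phi v"
proof -
  assume u: "u \<in> free_carrier AA MM" and v: "v \<in> free_carrier AA MM" and r: "req u v"
  have "(\<lambda>p. u p - v p) = free_add u (free_neg v)" by (simp add: free_add_def free_neg_def)
  hence "Phi (free_add u (free_neg v)) = (\<lambda>h. 0)" using r Rl_props unfolding req_def by metis
  hence "(\<lambda>h. Phi u h + - Phi v h) = (\<lambda>h. 0)" using u v fc_neg by (simp add: Phi_add' Phi_neg)
  thus ?thesis by (simp add: fun_eq_iff)
qed

abbreviation "oH \<equiv> \<one>\<^bsub>group_ring H\<^esub>"

lemma oH_carrier: "oH \<in> AA" by simp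

lemma MM_pw_add: "m \<in> MM \<Longrightarrow> m' \<in> MM \<Longrightarrow> (\<lambda>z. m z + m' z) \<in> MM"
  unfolding MM_eq by (rule Er_add[OF gG fG])

lemma MM_pw_diff: "m \<in> MM \<Longrightarrow> m' \<in> MM \<Longrightarrow> (\<lambda>z. m z - m' z) \<in> MM"
  unfolding MM_eq by (rule Er_diff[OF gG fG])

lemma MM_scal: "m \<in> MM \<Longrightarrow> (\<lambda>z. c * m z) \<in> MM"
  unfolding MM_eq by (rule Er_scal[OF gG fG])

lemma MM_zero: "(\<lambda>z. 0) \<in> MM"
  unfolding MM_eq by (rule Er_zero[OF gG fG])

lemma MM_sum: "finite S \<Longrightarrow> (\<And>p. p \<in> S \<Longrightarrow> x p \<in> MM) \<Longrightarrow> (\<lambda>z. \<Sum>p\<in>S. c p * x p z) \<in> MM"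
  unfolding MM_eq by (rule Er_sum[OF gG fG])

lemma MM_e_diff: "x \<in> carrier G \<Longrightarrow> y \<in> carrier G \<Longrightarrow> (\<lambda>z. gr_e x z - gr_e y z) \<in> MM"
  unfolding MM_eq by (rule Er_e_diff[OF gG fG])

lemma gen2_Rl: "a \<in> AA \<Longrightarrow> m \<in> MM \<Longrightarrow> m' \<in> MM \<Longrightarrow>
  req (free_delta (a, \<lambda>z. m z + m' z)) (\<lambda>p. free_delta (a, m) p + free_delta (a, m') p)"
proof -
  assume a: "a \<in> AA" and m: "m \<in> MM" and m': "m' \<in> MM"
  have "free_add (free_delta (a, m \<oplus>\<^bsub>group_ring G\<^esub> m')) (free_neg (free_add (free_delta (a, m)) (free_delta (a, m')))) \<in> Rl"
    by (rule tensor_relations.rel_gen) (unfold tensor_generators_def, use a m m' in blast)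
  thus ?thesis unfolding req_def gr_simps(5) free_add_def free_neg_def by (simp add: algebra_simps)
qed

lemma gen3_Rl: "a \<in> AA \<Longrightarrow> x \<in> carrier (group_ring G) \<Longrightarrow> m \<in> MM \<Longrightarrow>
  req (free_delta (a \<otimes>\<^bsub>group_ring H\<^esub> F x, m)) (free_delta (a, x \<otimes>\<^bsub>group_ring G\<^esub> m))"
proof -
  assume a: "a \<in> AA" and x: "x \<in> carrier (group_ring G)" and m: "m \<in> MM"
  have "free_add (free_delta (a \<otimes>\<^bsub>group_ring H\<^esub> F x, m)) (free_neg (free_delta (a, x \<otimes>\<^bsub>group_ring G\<^esub> m))) \<in> Rl"
    by (rule tensor_relations.rel_gen) (unfold tensor_generators_def, use a x m in blast)
  thus ?thesis unfolding req_def by (simp add: free_add_def free_neg_def)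
qed

abbreviation "D m \<equiv> free_delta (oH, m)"

lemma Dadd: "m \<in> MM \<Longrightarrow> m' \<in> MM \<Longrightarrow> req (D (\<lambda>z. m z + m' z)) (\<lambda>p. D m p + D m' p)"
  by (rule gen2_Rl[OF oH_carrier])

lemma D0: "D (\<lambda>z. 0) \<in> Rl"
proof -
  have "req (D (\<lambda>z. 0 + 0)) (\<lambda>p. D (\<lambda>z. 0) p + D (\<lambda>z. 0) p)"
    using Dadd[OF MM_zero MM_zero] .
  hence "(\<lambda>p. - (D (\<lambda>z. 0) p - (D (\<lambda>z. 0) p + D (\<lambda>z. 0) p))) \<in> Rl"
    unfolding req_def by (simp only: add_0) (rule Rl_neg)
  thus ?thesis by simp
qed

lemma Dscal: "m \<in> MM \<Longrightarrow> req (D (\<lambda>z. c * m z)) (\<lambda>p. c * D m p)"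
proof (induction c rule: int_induct[where k=0])
  case base thus ?case using D0 by (simp add: req_Rl)
next
  case (step1 i)
  have "req (D (\<lambda>z. i * m z + m z)) (\<lambda>p. D (\<lambda>z. i * m z) p + D m p)"
    using step1 by (intro Dadd MM_scal) auto
  moreover have "req (\<lambda>p. D (\<lambda>z. i * m z) p + D m p) (\<lambda>p. i * D m p + D m p)"
    using step1 by (intro req_add req_refl) auto
  ultimately have "req (D (\<lambda>z. i * m z + m z)) (\<lambda>p. i * D m p + D m p)" by (rule req_trans)
  thus ?case by (simp add: distrib_right)
next
  case (step2 i)
  have mm: "(\<lambda>z. (i - 1) * m z) \<in> MM" using step2 by (intro MM_scal)
  have "req (D (\<lambda>z. (i - 1) * m z + m z)) (\<lambda>p. D (\<lambda>z. (i - 1) * m z) p + D m p)"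
    using step2 mm by (intro Dadd) auto
  hence "req (D (\<lambda>z. i * m z)) (\<lambda>p. D (\<lambda>z. (i - 1) * m z) p + D m p)"
    by (simp add: algebra_simps)
  hence "req (\<lambda>p. D (\<lambda>z. (i - 1) * m z) p + D m p) (\<lambda>p. i * D m p)"
    using step2 by (blast intro: req_sym req_trans)
  hence "req (\<lambda>p. (D (\<lambda>z. (i - 1) * m z) p + D m p) + - D m p) (\<lambda>p. i * D m p + - D m p)"
    by (intro req_add req_refl)
  thus ?case by (simp add: algebra_simps)
qed

lemma Dsum: "finite S \<Longrightarrow> (\<And>p. p \<in> S \<Longrightarrow> x p \<in> MM) \<Longrightarrow>
   req (D (\<lambda>z. \<Sum>p\<in>S. c p * x p z)) (\<lambda>q. \<Sum>p\<in>S. c p * D (x p) q)"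
proof (induction S rule: finite_induct)
  case empty thus ?case using D0 by (simp add: req_Rl)
next
  case (insert a S)
  have xa: "x a \<in> MM" using insert by simp
  have xS: "(\<lambda>z. \<Sum>p\<in>S. c p * x p z) \<in> MM" using insert by (intro MM_sum) auto
  have "req (D (\<lambda>z. c a * x a z + (\<Sum>p\<in>S. c p * x p z)))
            (\<lambda>q. D (\<lambda>z. c a * x a z) q + D (\<lambda>z. \<Sum>p\<in>S. c p * x p z) q)"
    using xa xS by (intro Dadd MM_scal)
  moreover have "req (\<lambda>q. D (\<lambda>z. c a * x a z) q + D (\<lambda>z. \<Sum>p\<in>S. c p * x p z) q)
                     (\<lambda>q. c a * D (x a) q + (\<Sum>p\<in>S. c p * D (x p) q))"
    using insert xa by (intro req_add Dscal) auto
  ultimately have "req (D (\<lambda>z. c a * x a z + (\<Sum>p\<in>S. c p * x p z)))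
                     (\<lambda>q. c a * D (x a) q + (\<Sum>p\<in>S. c p * D (x p) q))" by (rule req_trans)
  thus ?case using insert by simp
qed

lemma Z_add: "m \<in> MM \<Longrightarrow> m' \<in> MM \<Longrightarrow> D m \<in> Rl \<Longrightarrow> D m' \<in> Rl \<Longrightarrow> D (\<lambda>z. m z + m' z) \<in> Rl"
  by (rule req_Rl2[OF Dadd]) (auto intro: Rl_add)

lemma Z_scal: "m \<in> MM \<Longrightarrow> D m \<in> Rl \<Longrightarrow> D (\<lambda>z. c * m z) \<in> Rl"
  by (rule req_Rl2[OF Dscal]) (auto intro: Rl_scal)

lemma Z_sum: "finite S \<Longrightarrow> (\<And>p. p \<in> S \<Longrightarrow> x p \<in> MM) \<Longrightarrow> (\<And>p. p \<in> S \<Longrightarrow> D (x p) \<in> Rl) \<Longrightarrow>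
   D (\<lambda>z. \<Sum>p\<in>S. c p * x p z) \<in> Rl"
  by (rule req_Rl2[OF Dsum]) (auto intro: Rl_sum)

lemma e_carr: "k \<in> carrier G \<Longrightarrow> gr_e k \<in> carrier (group_ring G)"
  by (rule gr_e_carrier[OF gG fG])

lemma Z_kill: "k \<in> carrier G \<Longrightarrow> f k = \<one>\<^bsub>H\<^esub> \<Longrightarrow> m \<in> MM \<Longrightarrow>
   D (\<lambda>z. (gr_e k \<otimes>\<^bsub>group_ring G\<^esub> m) z - m z) \<in> Rl"
proof -
  assume k: "k \<in> carrier G" and fk: "f k = \<one>\<^bsub>H\<^esub>" and m: "m \<in> MM"
  have Fe: "F (gr_e k) = oH" using F_e[OF k] fk gr_e_one[OF gH fH] by simp
  have r1: "req (D m) (D (gr_e k \<otimes>\<^bsub>group_ring G\<^esub> m))"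
    using gen3_Rl[OF oH_carrier e_carr[OF k] m] unfolding Fe by simp
  let ?X = "\<lambda>z. (gr_e k \<otimes>\<^bsub>group_ring G\<^esub> m) z - m z"
  have X: "?X \<in> MM" using m k by (intro MM_pw_diff MM_mult e_carr)
  have "req (D (\<lambda>z. ?X z + m z)) (\<lambda>p. D ?X p + D m p)" by (rule Dadd[OF X m])
  hence "req (D (gr_e k \<otimes>\<^bsub>group_ring G\<^esub> m)) (\<lambda>p. D ?X p + D m p)" by simp
  with r1 have "req (D m) (\<lambda>p. D ?X p + D m p)" by (rule req_trans)
  hence "(\<lambda>p. - (D m p - (D ?X p + D m p))) \<in> Rl" unfolding req_def by (rule Rl_neg)
  thus ?thesis by simp
qed

abbreviation "tt k \<equiv> (\<lambda>z. gr_e k z - gr_e \<one>\<^bsub>G\<^esub> z)"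

lemma tt_MM: "k \<in> carrier G \<Longrightarrow> tt k \<in> MM"
  by (rule MM_e_diff) simp_all

lemma Z_tk_r: "k \<in> carrier G \<Longrightarrow> f k = \<one>\<^bsub>H\<^esub> \<Longrightarrow> D (\<lambda>z. r * tt k z) \<in> Rl"
proof -
  assume k: "k \<in> carrier G" and fk: "f k = \<one>\<^bsub>H\<^esub>"
  have gm: "gr_int G r \<in> MM" unfolding MM_eq by (rule gr_int_Er[OF gG fG])
  have 1: "gr_e k \<otimes>\<^bsub>group_ring G\<^esub> gr_int G r = (\<lambda>z. r * gr_e k z)"
    by (rule gr_int_mult_r[OF gG fG e_carr[OF k]])
  have 2: "gr_int G r z = r * gr_e \<one>\<^bsub>G\<^esub> z" for z by (simp add: gr_int_def gr_e_def)
  have "(\<lambda>z. (gr_e k \<otimes>\<^bsub>group_ring G\<^esub> gr_int G r) z - gr_int G r z) = (\<lambda>z. r * tt k z)"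
    by (rule ext) (simp add: 1 2 right_diff_distrib)
  thus ?thesis using Z_kill[OF k fk gm] by simp
qed

lemma tt_mult: "k \<in> carrier G \<Longrightarrow> y \<in> carrier G \<Longrightarrow>
   gr_e k \<otimes>\<^bsub>group_ring G\<^esub> tt y = (\<lambda>z. gr_e (k \<otimes>\<^bsub>G\<^esub> y) z - gr_e k z)"
proof -
  assume k: "k \<in> carrier G" and y: "y \<in> carrier G"
  have "gr_e k \<otimes>\<^bsub>group_ring G\<^esub> tt y
      = (\<lambda>z. (gr_e k \<otimes>\<^bsub>group_ring G\<^esub> gr_e y) z - (gr_e k \<otimes>\<^bsub>group_ring G\<^esub> gr_e \<one>\<^bsub>G\<^esub>) z)"
    by (rule gr_mult_diff_r[OF gG fG])
  also have "\<dots> = (\<lambda>z. gr_e (k \<otimes>\<^bsub>G\<^esub> y) z - gr_e k z)"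
    using k y by (simp add: gr_e_mult[OF gG fG])
  finally show ?thesis .
qed

lemma Z_pow: "k \<in> carrier G \<Longrightarrow> f k = \<one>\<^bsub>H\<^esub> \<Longrightarrow> req (D (tt (k [^]\<^bsub>G\<^esub> j))) (D (\<lambda>z. int j * tt k z))"
proof (induction j)
  case 0 thus ?case by (simp add: req_refl)
next
  case (Suc j)
  note k = Suc.prems(1) and fk = Suc.prems(2)
  let ?y = "k [^]\<^bsub>G\<^esub> j"
  have y: "?y \<in> carrier G" using k by simp
  let ?X = "\<lambda>z. (gr_e k \<otimes>\<^bsub>group_ring G\<^esub> tt ?y) z - tt ?y z"
  have ZX: "D ?X \<in> Rl" by (rule Z_kill[OF k fk tt_MM[OF y]])
  have XM: "?X \<in> MM" using k y by (intro MM_pw_diff MM_mult e_carr tt_MM)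
  have eq: "tt (k [^]\<^bsub>G\<^esub> Suc j) = (\<lambda>z. ?X z + (tt k z + tt ?y z))"
  proof -
    have "k [^]\<^bsub>G\<^esub> Suc j = k \<otimes>\<^bsub>G\<^esub> ?y" by (rule G.nat_pow_Suc2[OF k])
    thus ?thesis using k y by (simp add: tt_mult)
  qed
  have r1: "req (D (\<lambda>z. ?X z + (tt k z + tt ?y z))) (\<lambda>p. D ?X p + D (\<lambda>z. tt k z + tt ?y z) p)"
    using XM k y by (intro Dadd MM_pw_add tt_MM)
  have r2: "req (\<lambda>p. D ?X p + D (\<lambda>z. tt k z + tt ?y z) p) (\<lambda>p. 0 + (D (tt k) p + D (tt ?y) p))"
    using ZX k y by (intro req_add Dadd tt_MM) (simp_all add: req_Rl)
  have r3: "req (\<lambda>p. 0 + (D (tt k) p + D (tt ?y) p)) (\<lambda>p. D (tt k) p + D (\<lambda>z. int j * tt k z) p)"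
    using Suc.IH[OF k fk] by (simp add: req_add req_refl)
  have r4: "req (\<lambda>p. D (tt k) p + D (\<lambda>z. int j * tt k z) p) (D (\<lambda>z. tt k z + int j * tt k z))"
    using k by (intro req_sym[OF Dadd] tt_MM MM_scal)
  have "req (D (tt (k [^]\<^bsub>G\<^esub> Suc j))) (D (\<lambda>z. tt k z + int j * tt k z))"
    unfolding eq using r1 r2 r3 r4 by (blast intro: req_trans)
  moreover have "(\<lambda>z. tt k z + int j * tt k z) = (\<lambda>z. int (Suc j) * tt k z)"
    by (rule ext) (simp add: algebra_simps)
  ultimately show ?case by simp
qed

lemma Z_tk: "coprime r (int (order G)) \<Longrightarrow> k \<in> carrier G \<Longrightarrow> f k = \<one>\<^bsub>H\<^esub> \<Longrightarrow> D (tt k) \<in> Rl"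
proof -
  assume cop: "coprime r (int (order G))" and k: "k \<in> carrier G" and fk: "f k = \<one>\<^bsub>H\<^esub>"
  have "req (D (tt (k [^]\<^bsub>G\<^esub> order G))) (D (\<lambda>z. int (order G) * tt k z))" by (rule Z_pow[OF k fk])
  hence "req (D (\<lambda>z. 0)) (D (\<lambda>z. int (order G) * tt k z))" using k by (simp add: G.pow_order_eq_1)
  hence Zn: "D (\<lambda>z. int (order G) * tt k z) \<in> Rl" using D0 by (blast intro: req_Rl2 req_sym)
  have Zr: "D (\<lambda>z. r * tt k z) \<in> Rl" by (rule Z_tk_r[OF k fk])
  obtain u v where uv: "u * r + v * int (order G) = gcd r (int (order G))" using bezout_int by blast
  hence uv1: "u * r + v * int (order G) = 1" using cop by (simp add: coprime_iff_gcd_eq_1)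
  have tM: "tt k \<in> MM" by (rule tt_MM[OF k])
  have a: "D (\<lambda>z. u * (r * tt k z)) \<in> Rl" by (rule Z_scal[OF MM_scal[OF tM] Zr])
  have b: "D (\<lambda>z. v * (int (order G) * tt k z)) \<in> Rl" by (rule Z_scal[OF MM_scal[OF tM] Zn])
  have "D (\<lambda>z. u * (r * tt k z) + v * (int (order G) * tt k z)) \<in> Rl"
    by (rule Z_add[OF MM_scal[OF MM_scal[OF tM]] MM_scal[OF MM_scal[OF tM]] a b])
  moreover have "(\<lambda>z. u * (r * tt k z) + v * (int (order G) * tt k z)) = tt k"
  proof (rule ext)
    fix z
    have "u * (r * tt k z) + v * (int (order G) * tt k z) = (u * r + v * int (order G)) * tt k z"
      by (simp add: algebra_simps)
    thus "u * (r * tt k z) + v * (int (order G) * tt k z) = tt k z" by (simp add: uv1)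
  qed
  ultimately show ?thesis by simp
qed

lemma Z_pair: "coprime r (int (order G)) \<Longrightarrow> g \<in> carrier G \<Longrightarrow> k \<in> carrier G \<Longrightarrow> f k = \<one>\<^bsub>H\<^esub> \<Longrightarrow>
   D (\<lambda>z. gr_e (g \<otimes>\<^bsub>G\<^esub> k) z - gr_e g z) \<in> Rl"
proof -
  assume cop: "coprime r (int (order G))" and g: "g \<in> carrier G" and k: "k \<in> carrier G" and fk: "f k = \<one>\<^bsub>H\<^esub>"
  define k' where "k' = g \<otimes>\<^bsub>G\<^esub> k \<otimes>\<^bsub>G\<^esub> inv\<^bsub>G\<^esub> g"
  have k': "k' \<in> carrier G" using g k by (simp add: k'_def)
  have fk': "f k' = \<one>\<^bsub>H\<^esub>"
    using g k fk f_in[OF g] by (simp add: k'_def fh.hom_mult fh.hom_inv)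
  have kg: "k' \<otimes>\<^bsub>G\<^esub> g = g \<otimes>\<^bsub>G\<^esub> k"
    using g k by (simp add: k'_def G.m_assoc)
  let ?Y = "\<lambda>z. (gr_e k' \<otimes>\<^bsub>group_ring G\<^esub> tt g) z - tt g z"
  have ZY: "D ?Y \<in> Rl" by (rule Z_kill[OF k' fk' tt_MM[OF g]])
  have YM: "?Y \<in> MM" using k' g by (intro MM_pw_diff MM_mult e_carr tt_MM)
  have Zk': "D (tt k') \<in> Rl" by (rule Z_tk[OF cop k' fk'])
  have "D (\<lambda>z. ?Y z + tt k' z) \<in> Rl" by (rule Z_add[OF YM tt_MM[OF k'] ZY Zk'])
  moreover have "(\<lambda>z. ?Y z + tt k' z) = (\<lambda>z. gr_e (g \<otimes>\<^bsub>G\<^esub> k) z - gr_e g z)"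
    using k' g by (simp add: tt_mult kg)
  ultimately show ?thesis by simp
qed

lemma Z_ker: "coprime r (int (order G)) \<Longrightarrow> \<mu> \<in> MM \<Longrightarrow> F \<mu> = (\<lambda>h. 0) \<Longrightarrow> D \<mu> \<in> Rl"
proof -
  assume cop: "coprime r (int (order G))" and mu: "\<mu> \<in> MM" and Fmu: "F \<mu> = (\<lambda>h. 0)"
  have muc: "\<mu> \<in> carrier (group_ring G)" by (rule MM_carrier[OF mu])
  let ?x = "\<lambda>g. (\<lambda>z. gr_e g z - gr_e (sec (f g)) z)"
  have xM: "?x g \<in> MM" if g: "g \<in> carrier G" for g
    using sec[OF f_in[OF g]] g by (intro MM_e_diff) auto
  have Zx: "D (?x g) \<in> Rl" if g: "g \<in> carrier G" for g
  proof -
    let ?s = "sec (f g)"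
    have s: "?s \<in> carrier G" "f ?s = f g" using sec[OF f_in[OF g]] by auto
    let ?k = "inv\<^bsub>G\<^esub> ?s \<otimes>\<^bsub>G\<^esub> g"
    have k: "?k \<in> carrier G" using s g by simp
    have fk: "f ?k = \<one>\<^bsub>H\<^esub>" using s g f_in[OF g] by (simp add: fh.hom_mult fh.hom_inv)
    have sk: "?s \<otimes>\<^bsub>G\<^esub> ?k = g" using s g by (simp add: Gc1[OF gG fG])
    show ?thesis using Z_pair[OF cop s(1) k fk] unfolding sk .
  qed
  have ZS: "D (\<lambda>z. \<Sum>g\<in>carrier G. \<mu> g * ?x g z) \<in> Rl"
    by (rule Z_sum[OF fG xM Zx])
  have "(\<lambda>z. \<Sum>g\<in>carrier G. \<mu> g * ?x g z) = \<mu>"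
  proof (rule ext)
    fix z
    have 1: "(\<Sum>g\<in>carrier G. \<mu> g * gr_e g z) = \<mu> z"
    proof (cases "z \<in> carrier G")
      case True
      have "(\<Sum>g\<in>carrier G. \<mu> g * gr_e g z) = (\<Sum>g\<in>carrier G. if g = z then \<mu> z else 0)"
        by (rule sum.cong) (auto simp: gr_e_def)
      also have "\<dots> = \<mu> z" using True fG by (simp add: sum.delta)
      finally show ?thesis .
    next
      case False
      have "(\<Sum>g\<in>carrier G. \<mu> g * gr_e g z) = (\<Sum>g\<in>carrier G. 0)"
        by (rule sum.cong) (use False in \<open>auto simp: gr_e_def\<close>)
      thus ?thesis using False muc by (simp add: gr_simps)
    qed
    have 2: "(\<Sum>g\<in>carrier G. \<mu> g * gr_e (sec (f g)) z) = 0"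
      using F_fiber[of \<mu> "\<lambda>h. gr_e (sec h) z"] by (simp add: Fmu)
    show "(\<Sum>g\<in>carrier G. \<mu> g * ?x g z) = \<mu> z"
      using 1 2 by (simp add: right_diff_distrib sum_subtractf)
  qed
  thus ?thesis using ZS by simp
qed

lemma Dlift: "a \<in> AA \<Longrightarrow> m \<in> MM \<Longrightarrow> req (free_delta (a, m)) (D (lift a \<otimes>\<^bsub>group_ring G\<^esub> m))"
proof -
  assume a: "a \<in> AA" and m: "m \<in> MM"
  have "req (free_delta (oH \<otimes>\<^bsub>group_ring H\<^esub> F (lift a), m)) (D (lift a \<otimes>\<^bsub>group_ring G\<^esub> m))"
    by (rule gen3_Rl[OF oH_carrier lift_carrier m])
  thus ?thesis using a by (simp add: F_lift)
qed

lemma w_expand: "finite S \<Longrightarrow> {p. w p \<noteq> 0} \<subseteq> S \<Longrightarrow> w = (\<lambda>q. \<Sum>p\<in>S. w p * free_delta p q)"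
proof (rule ext)
  fix q assume fS: "finite S" and sub: "{p. w p \<noteq> 0} \<subseteq> S"
  have "(\<Sum>p\<in>S. w p * free_delta p q) = (\<Sum>p\<in>S. if p = q then w q else 0)"
    by (rule sum.cong) (auto simp: free_delta_def)
  also have "\<dots> = w q" using fS sub by (auto simp: sum.delta')
  finally show "w q = (\<Sum>p\<in>S. w p * free_delta p q)" by simp
qed

lemma core: "coprime r (int (order G)) \<Longrightarrow> w \<in> free_carrier AA MM \<Longrightarrow> Phi w = (\<lambda>h. 0) \<Longrightarrow> w \<in> Rl"
proof -
  assume cop: "coprime r (int (order G))" and w: "w \<in> free_carrier AA MM" and Pw: "Phi w = (\<lambda>h. 0)"
  let ?S = "{p. w p \<noteq> 0}"
  have fS: "finite ?S" and sS: "?S \<subseteq> AA \<times> MM" using w by (auto simp: free_carrier_def)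
  let ?mm = "\<lambda>p. lift (fst p) \<otimes>\<^bsub>group_ring G\<^esub> snd p"
  have mmM: "?mm p \<in> MM" if "p \<in> ?S" for p
    using sS that by (intro MM_mult lift_carrier) auto
  have r1: "(\<lambda>q. \<Sum>p\<in>?S. w p * (free_delta p q - D (?mm p) q)) \<in> Rl"
  proof (rule Rl_sum[OF fS])
    fix p assume p: "p \<in> ?S"
    have "req (free_delta (fst p, snd p)) (D (?mm p))" using sS p by (intro Dlift) auto
    thus "(\<lambda>q. free_delta p q - D (?mm p) q) \<in> Rl" by (simp add: req_def)
  qed
  have "req w (\<lambda>q. \<Sum>p\<in>?S. w p * D (?mm p) q)"
  proof -
    have "(\<lambda>q. w q - (\<Sum>p\<in>?S. w p * D (?mm p) q)) = (\<lambda>q. \<Sum>p\<in>?S. w p * (free_delta p q - D (?mm p) q))"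
      by (subst w_expand[OF fS order_refl]) (simp add: right_diff_distrib sum_subtractf)
    thus ?thesis using r1 by (simp add: req_def)
  qed
  moreover have "req (\<lambda>q. \<Sum>p\<in>?S. w p * D (?mm p) q) (D (\<lambda>z. \<Sum>p\<in>?S. w p * ?mm p z))"
    by (rule req_sym[OF Dsum[OF fS mmM]])
  ultimately have rw: "req w (D (\<lambda>z. \<Sum>p\<in>?S. w p * ?mm p z))" by (rule req_trans)
  let ?mu = "\<lambda>z. \<Sum>p\<in>?S. w p * ?mm p z"
  have muM: "?mu \<in> MM" by (rule MM_sum[OF fS mmM])
  have Dfc: "D ?mu \<in> free_carrier AA MM" using muM by (intro fc_delta) auto
  have "Phi w = Phi (D ?mu)" by (rule Phi_req[OF w Dfc rw])
  also have "\<dots> = F ?mu" by (simp add: Phi_delta T_def F_carrier)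
  finally have "F ?mu = (\<lambda>h. 0)" using Pw by simp
  hence "D ?mu \<in> Rl" by (rule Z_ker[OF cop muM])
  thus ?thesis by (rule req_Rl2[OF rw])
qed

lemma cls_self: "u \<in> cls u"
proof -
  have "free_add u (\<lambda>p. 0) \<in> cls u" unfolding tensor_class_def by (rule imageI[OF Rl_zero])
  moreover have "free_add u (\<lambda>p. 0) = u" by (simp add: free_add_def)
  ultimately show ?thesis by simp
qed

lemma cls_req: "v \<in> cls u \<Longrightarrow> req v u"
proof -
  assume "v \<in> cls u"
  then obtain \<rho> where rho: "\<rho> \<in> Rl" and v: "v = free_add u \<rho>" unfolding tensor_class_def by blast
  have "(\<lambda>p. v p - u p) = \<rho>" using v by (simp add: free_add_def)
  thus ?thesis using rho by (simp add: req_def)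
qed

lemma req_in_cls: "req v u \<Longrightarrow> v \<in> cls u"
proof -
  assume "req v u"
  hence "(\<lambda>p. v p - u p) \<in> Rl" by (simp add: req_def)
  hence "free_add u (\<lambda>p. v p - u p) \<in> cls u" unfolding tensor_class_def by (rule imageI)
  moreover have "free_add u (\<lambda>p. v p - u p) = v" by (simp add: free_add_def)
  ultimately show ?thesis by simp
qed

lemma cls_eq: "req u v \<Longrightarrow> cls u = cls v"
proof
  assume r: "req u v"
  show "cls u \<subseteq> cls v"
  proof
    fix x assume "x \<in> cls u"
    hence "req x u" by (rule cls_req)
    hence "req x v" using r by (rule req_trans)
    thus "x \<in> cls v" by (rule req_in_cls)
  qed
  show "cls v \<subseteq> cls u"
  proof
    fix x assume "x \<in> cls v"
    hence "req x v" by (rule cls_req)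
    hence "req x u" using req_sym[OF r] by (rule req_trans)
    thus "x \<in> cls u" by (rule req_in_cls)
  qed
qed

lemma cls_fc: "u \<in> free_carrier AA MM \<Longrightarrow> v \<in> cls u \<Longrightarrow> v \<in> free_carrier AA MM \<and> Phi v = Phi u"
proof -
  assume u: "u \<in> free_carrier AA MM" and "v \<in> cls u"
  then obtain \<rho> where rho: "\<rho> \<in> Rl" and v: "v = free_add u \<rho>" unfolding tensor_class_def by blast
  have rf: "\<rho> \<in> free_carrier AA MM" and rP: "Phi \<rho> = (\<lambda>h. 0)" using Rl_props[OF rho] by auto
  show ?thesis using u rf rP unfolding v by (simp add: fc_add Phi_add')
qed

definition phi :: "('h, 'g) free_elem set \<Rightarrow> ('h \<Rightarrow> int)" where
  "phi S = Phi (SOME u. u \<in> S)"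

lemma some_cls: "u \<in> free_carrier AA MM \<Longrightarrow> (SOME v. v \<in> cls u) \<in> free_carrier AA MM \<and> Phi (SOME v. v \<in> cls u) = Phi u"
proof -
  assume u: "u \<in> free_carrier AA MM"
  have "(SOME v. v \<in> cls u) \<in> cls u" by (rule someI[where P="\<lambda>v. v \<in> cls u", OF cls_self])
  thus ?thesis by (rule cls_fc[OF u])
qed

lemma phi_cls: "u \<in> free_carrier AA MM \<Longrightarrow> phi (cls u) = Phi u"
  unfolding phi_def using some_cls by blast

lemma conv_lin: "finite S \<Longrightarrow> b \<otimes>\<^bsub>group_ring H\<^esub> (\<lambda>h. \<Sum>p\<in>S. cc p * XX p h)
   = (\<lambda>h. \<Sum>p\<in>S. cc p * (b \<otimes>\<^bsub>group_ring H\<^esub> XX p) h)"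
proof (rule ext)
  fix h assume fS: "finite S"
  show "(b \<otimes>\<^bsub>group_ring H\<^esub> (\<lambda>h. \<Sum>p\<in>S. cc p * XX p h)) h = (\<Sum>p\<in>S. cc p * (b \<otimes>\<^bsub>group_ring H\<^esub> XX p) h)"
  proof (cases "h \<in> carrier H")
    case False thus ?thesis unfolding gr_simps(2) by simp
  next
    case True
    have "(b \<otimes>\<^bsub>group_ring H\<^esub> (\<lambda>h. \<Sum>p\<in>S. cc p * XX p h)) h
        = (\<Sum>x\<in>carrier H. b x * (\<Sum>p\<in>S. cc p * XX p (inv\<^bsub>H\<^esub> x \<otimes>\<^bsub>H\<^esub> h)))"
      using True unfolding gr_simps(2) by simp
    also have "\<dots> = (\<Sum>x\<in>carrier H. \<Sum>p\<in>S. cc p * (b x * XX p (inv\<^bsub>H\<^esub> x \<otimes>\<^bsub>H\<^esub> h)))"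
      by (simp only: sum_distrib_left mult.left_commute)
    also have "\<dots> = (\<Sum>p\<in>S. \<Sum>x\<in>carrier H. cc p * (b x * XX p (inv\<^bsub>H\<^esub> x \<otimes>\<^bsub>H\<^esub> h)))"
      by (rule sum.swap)
    also have "\<dots> = (\<Sum>p\<in>S. cc p * (b \<otimes>\<^bsub>group_ring H\<^esub> XX p) h)"
      using True unfolding gr_simps(2) by (simp add: sum_distrib_left)
    finally show ?thesis .
  qed
qed

lemma fc_smult: "u \<in> free_carrier AA MM \<Longrightarrow> free_smult H b u \<in> free_carrier AA MM"
proof -
  assume u: "u \<in> free_carrier AA MM"
  let ?g = "\<lambda>p. (b \<otimes>\<^bsub>group_ring H\<^esub> fst p, snd p)"
  have sub: "{q. free_smult H b u q \<noteq> 0} \<subseteq> ?g ` {p. u p \<noteq> 0}"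
  proof
    fix q assume "q \<in> {q. free_smult H b u q \<noteq> 0}"
    hence "sum u {p. u p \<noteq> 0 \<and> ?g p = q} \<noteq> 0" by (simp add: free_smult_def)
    hence "{p. u p \<noteq> 0 \<and> ?g p = q} \<noteq> {}" by (metis sum.empty)
    thus "q \<in> ?g ` {p. u p \<noteq> 0}" by blast
  qed
  have "?g ` {p. u p \<noteq> 0} \<subseteq> AA \<times> MM"
    using u by (auto simp: free_carrier_def gr_mult_carrier[OF gH fH])
  moreover have "finite (?g ` {p. u p \<noteq> 0})" using u by (simp add: free_carrier_def)
  ultimately show ?thesis using sub unfolding free_carrier_def by (blast intro: finite_subset)
qed

lemma Phi_smult: "b \<in> AA \<Longrightarrow> u \<in> free_carrier AA MM \<Longrightarrow> Phi (free_smult H b u) = b \<otimes>\<^bsub>group_ring H\<^esub> Phi u"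
proof -
  assume b: "b \<in> AA" and u: "u \<in> free_carrier AA MM"
  let ?S = "{p. u p \<noteq> 0}"
  let ?g = "\<lambda>p. (b \<otimes>\<^bsub>group_ring H\<^esub> fst p, snd p)"
  have fS: "finite ?S" and sS: "?S \<subseteq> AA \<times> MM" using u by (auto simp: free_carrier_def)
  have sub: "{q. free_smult H b u q \<noteq> 0} \<subseteq> ?g ` ?S"
  proof
    fix q assume "q \<in> {q. free_smult H b u q \<noteq> 0}"
    hence "sum u {p. u p \<noteq> 0 \<and> ?g p = q} \<noteq> 0" by (simp add: free_smult_def)
    hence "{p. u p \<noteq> 0 \<and> ?g p = q} \<noteq> {}" by (metis sum.empty)
    thus "q \<in> ?g ` ?S" by blast
  qed
  have Tg: "T (?g p) = b \<otimes>\<^bsub>group_ring H\<^esub> T p" if p: "p \<in> ?S" for p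
    using sS p b F_carrier unfolding T_def by (auto simp: RH.m_assoc)
  have "Phi (free_smult H b u) = (\<lambda>h. \<Sum>q\<in>?g ` ?S. free_smult H b u q * T q h)"
    by (rule Phi_sum[OF finite_imageI[OF fS] sub])
  also have "\<dots> = (\<lambda>h. \<Sum>q\<in>?g ` ?S. \<Sum>p\<in>{p. p \<in> ?S \<and> ?g p = q}. u p * T (?g p) h)"
    by (rule ext, rule sum.cong) (auto simp: free_smult_def sum_distrib_right intro!: sum.cong)
  also have "\<dots> = (\<lambda>h. \<Sum>p\<in>?S. u p * T (?g p) h)"
    by (rule ext, rule sum.image_gen[OF fS, symmetric])
  also have "\<dots> = (\<lambda>h. \<Sum>p\<in>?S. u p * (b \<otimes>\<^bsub>group_ring H\<^esub> T p) h)"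
    by (rule ext, rule sum.cong) (simp_all add: Tg)
  also have "\<dots> = b \<otimes>\<^bsub>group_ring H\<^esub> (\<lambda>h. \<Sum>p\<in>?S. u p * T p h)"
    by (rule conv_lin[OF fS, symmetric])
  also have "\<dots> = b \<otimes>\<^bsub>group_ring H\<^esub> Phi u" by (simp add: Phi_def)
  finally show ?thesis .
qed

lemma F_MH: "m \<in> MM \<Longrightarrow> F m \<in> Er H r"
  using F_carrier eps_F[of m] unfolding MM_eq Er_def by simp

lemma Phi_MH: "u \<in> free_carrier AA MM \<Longrightarrow> Phi u \<in> Er H r"
proof -
  assume u: "u \<in> free_carrier AA MM"
  let ?S = "{p. u p \<noteq> 0}"
  have fS: "finite ?S" and sS: "?S \<subseteq> AA \<times> MM" using u by (auto simp: free_carrier_def)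
  have "(\<lambda>h. \<Sum>p\<in>?S. u p * T p h) \<in> Er H r"
  proof (rule Er_sum[OF gH fH fS])
    fix p assume "p \<in> ?S"
    hence p: "fst p \<in> AA" "snd p \<in> MM" using sS by auto
    show "T p \<in> Er H r" unfolding T_def by (rule Er_mult[OF gH fH F_MH[OF p(2)] p(1)])
  qed
  thus ?thesis by (simp add: Phi_def)
qed

lemma main_iso: "coprime r (int (order G)) \<Longrightarrow>
  \<exists>\<phi>. bij_betw \<phi> (tensor_carrier G H f MM) (aug_ideal_r H r)
            \<and> (\<forall>S1\<in>tensor_carrier G H f MM.
                 \<forall>S2\<in>tensor_carrier G H f MM.
                   \<phi> (tensor_add G H f MM S1 S2)
                     = \<phi> S1 \<oplus>\<^bsub>group_ring H\<^esub> \<phi> S2)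
            \<and> (\<forall>b\<in>carrier (group_ring H). \<forall>S1\<in>tensor_carrier G H f MM.
                   \<phi> (tensor_smult G H f MM b S1)
                     = b \<otimes>\<^bsub>group_ring H\<^esub> \<phi> S1)"
proof -
  assume cop: "coprime r (int (order G))"
  have TC: "tensor_carrier G H f MM = cls ` free_carrier AA MM" by (simp add: tensor_carrier_def)
  have MH: "aug_ideal_r H r = Er H r" by (rule aug_ideal_r_eq[OF gH fH])
  have inj: "inj_on phi (tensor_carrier G H f MM)"
  proof (rule inj_onI)
    fix S1 S2 assume S1: "S1 \<in> tensor_carrier G H f MM" and S2: "S2 \<in> tensor_carrier G H f MM"
      and eq: "phi S1 = phi S2"
    obtain u where u: "u \<in> free_carrier AA MM" and S1u: "S1 = cls u" using S1 TC by auto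
    obtain v where v: "v \<in> free_carrier AA MM" and S2v: "S2 = cls v" using S2 TC by auto
    have Puv: "Phi u = Phi v" using eq u v by (simp add: S1u S2v phi_cls)
    let ?w = "free_add u (free_neg v)"
    have w: "?w \<in> free_carrier AA MM" using u v by (simp add: fc_add fc_neg)
    have "Phi ?w = (\<lambda>h. Phi u h + - Phi v h)" using u v by (simp add: Phi_add' fc_neg Phi_neg)
    hence "Phi ?w = (\<lambda>h. 0)" using Puv by simp
    hence "?w \<in> Rl" by (rule core[OF cop w])
    hence "req u v" by (simp add: req_def free_add_def free_neg_def)
    thus "S1 = S2" unfolding S1u S2v by (rule cls_eq)
  qed
  have img: "phi ` tensor_carrier G H f MM = aug_ideal_r H r"
  proof
    show "phi ` tensor_carrier G H f MM \<subseteq> aug_ideal_r H r"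
      using Phi_MH phi_cls unfolding TC MH by auto
    show "aug_ideal_r H r \<subseteq> phi ` tensor_carrier G H f MM"
    proof
      fix y assume "y \<in> aug_ideal_r H r"
      hence y: "y \<in> Er H r" by (simp add: MH)
      have yc: "y \<in> AA" using y by (simp add: Er_def)
      have lM: "lift y \<in> MM"
        unfolding MM_eq Er_def using lift_carrier y eps_F[of "lift y"] F_lift[OF yc] by (simp add: Er_def)
      have dfc: "D (lift y) \<in> free_carrier AA MM" using lM by (intro fc_delta) auto
      have "phi (cls (D (lift y))) = y"
        using yc by (simp add: phi_cls[OF dfc] Phi_delta T_def F_lift)
      moreover have "cls (D (lift y)) \<in> tensor_carrier G H f MM" unfolding TC using dfc by blast
      ultimately show "y \<in> phi ` tensor_carrier G H f MM" by (metis imageI)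
    qed
  qed
  have add: "phi (tensor_add G H f MM S1 S2) = phi S1 \<oplus>\<^bsub>group_ring H\<^esub> phi S2"
    if S1: "S1 \<in> tensor_carrier G H f MM" and S2: "S2 \<in> tensor_carrier G H f MM" for S1 S2
  proof -
    obtain u where u: "u \<in> free_carrier AA MM" and S1u: "S1 = cls u" using S1 TC by auto
    obtain v where v: "v \<in> free_carrier AA MM" and S2v: "S2 = cls v" using S2 TC by auto
    let ?u' = "SOME x. x \<in> cls u" and ?v' = "SOME x. x \<in> cls v"
    have u': "?u' \<in> free_carrier AA MM" "Phi ?u' = Phi u" using some_cls[OF u] by auto
    have v': "?v' \<in> free_carrier AA MM" "Phi ?v' = Phi v" using some_cls[OF v] by auto
    have "phi (tensor_add G H f MM S1 S2) = phi (cls (free_add ?u' ?v'))"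
      by (simp add: tensor_add_def S1u S2v)
    also have "\<dots> = Phi (free_add ?u' ?v')" by (rule phi_cls[OF fc_add[OF u'(1) v'(1)]])
    also have "\<dots> = (\<lambda>h. Phi u h + Phi v h)" using u' v' by (simp add: Phi_add')
    also have "\<dots> = phi S1 \<oplus>\<^bsub>group_ring H\<^esub> phi S2" by (simp add: S1u S2v phi_cls u v gr_simps(5))
    finally show ?thesis .
  qed
  have smult: "phi (tensor_smult G H f MM b S1) = b \<otimes>\<^bsub>group_ring H\<^esub> phi S1"
    if b: "b \<in> carrier (group_ring H)" and S1: "S1 \<in> tensor_carrier G H f MM" for b S1
  proof -
    obtain u where u: "u \<in> free_carrier AA MM" and S1u: "S1 = cls u" using S1 TC by auto
    let ?u' = "SOME x. x \<in> cls u"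
    have u': "?u' \<in> free_carrier AA MM" "Phi ?u' = Phi u" using some_cls[OF u] by auto
    have "phi (tensor_smult G H f MM b S1) = phi (cls (free_smult H b ?u'))"
      by (simp add: tensor_smult_def S1u)
    also have "\<dots> = Phi (free_smult H b ?u')" by (rule phi_cls[OF fc_smult[OF u'(1)]])
    also have "\<dots> = b \<otimes>\<^bsub>group_ring H\<^esub> Phi ?u'" by (rule Phi_smult[OF b u'(1)])
    also have "\<dots> = b \<otimes>\<^bsub>group_ring H\<^esub> phi S1" by (simp add: u'(2) S1u phi_cls[OF u])
    finally show ?thesis .
  qed
  show ?thesis
    by (rule exI[where x=phi]) (use inj img add smult in \<open>auto simp: bij_betw_def\<close>)
qed

end
end

theorem lemma3p2:
  fixes G :: "('g, 'm) monoid_scheme" and H :: "('h, 'n) monoid_scheme"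
    and f :: "'g \<Rightarrow> 'h" and r :: int
  assumes "group G" and "group H"
    and "finite (carrier G)" and "finite (carrier H)"
    and "f \<in> hom G H" and "f ` carrier G = carrier H"
    and "coprime r (int (order G))"
  shows "\<exists>\<phi>. bij_betw \<phi> (tensor_carrier G H f (aug_ideal_r G r)) (aug_ideal_r H r)
            \<and> (\<forall>S1\<in>tensor_carrier G H f (aug_ideal_r G r).
                 \<forall>S2\<in>tensor_carrier G H f (aug_ideal_r G r).
                   \<phi> (tensor_add G H f (aug_ideal_r G r) S1 S2)
                     = \<phi> S1 \<oplus>\<^bsub>group_ring H\<^esub> \<phi> S2)
            \<and> (\<forall>b\<in>carrier (group_ring H). \<forall>S1\<in>tensor_carrier G H f (aug_ideal_r G r).
                   \<phi> (tensor_smult G H f (aug_ideal_r G r) b S1)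
                     = b \<otimes>\<^bsub>group_ring H\<^esub> \<phi> S1)"
  by (rule main_iso[OF assms])

end
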